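(* Every function $f:\mathbb{N}^n\to\mathbb{N}$ that is representable in $\lambda\mu\mathrm{T}$ is representable in Gödel's T: if a closed term $t$ with $\emptyset;\emptyset\vdash t:\mathbb{N}^n\to\mathbb{N}$ represents $f$ in $\lambda\mu\mathrm{T}$, then there is a closed $\lambda\mathrm{T}$-term $t'$ with $\vdash t':\mathbb{N}^n\to\mathbb{N}$ that represents $f$ in Gödel's T.
   Context: $\lambda\mu\mathrm{T}$: types $\rho ::= \mathbb{N}\mid\sigma\to\tau$; terms $t,r,s ::= x \mid \lambda x{:}\rho.r \mid t\,s \mid \mu\alpha{:}\rho.c \mid 0 \mid \mathsf{S}\,t \mid \mathsf{nrec}_\rho\ r\ s\ t$ and commands $c ::= [\alpha]t$ ($x$ ranging over $\lambda$-variables, $\alpha$ over $\mu$-variables). Typing judgments $\Gamma;\Delta\vdash t:\rho$ and $\Gamma;\Delta\vdash c$ are generated by: (var) $x:\rho\in\Gamma \Rightarrow \Gamma;\Delta\vdash x:\rho$; (lambda) $\Gamma,x:\sigma;\Delta\vdash t:\tau \Rightarrow \Gamma;\Delta\vdash\lambda x{:}\sigma.t:\sigma\to\tau$; (app) $\Gamma;\Delta\vdash t:\sigma\to\tau$, $\Gamma;\Delta\vdash s:\sigma$ $\Rightarrow \Gamma;\Delta\vdash ts:\tau$; (zero) $\Gamma;\Delta\vdash 0:\mathbb{N}$; (suc) $\Gamma;\Delta\vdash t:\mathbb{N}\Rightarrow\Gamma;\Delta\vdash \mathsf{S}\,t:\mathbb{N}$; (nrec) $\Gamma;\Delta\vdash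 r:\rho$, $\Gamma;\Delta\vdash s:\mathbb{N}\to\rho\to\rho$, $\Gamma;\Delta\vdash t:\mathbb{N}$ $\Rightarrow \Gamma;\Delta\vdash\mathsf{nrec}_\rho\ r\ s\ t:\rho$; (activate) $\Gamma;\Delta,\alpha:\rho\vdash c\Rightarrow\Gamma;\Delta\vdash\mu\alpha{:}\rho.c:\rho$; (passivate) $\Gamma;\Delta\vdash t:\rho$, $\alpha:\rho\in\Delta$ $\Rightarrow \Gamma;\Delta\vdash[\alpha]t$. Numerals $\underline{n}:=\mathsf{S}^n0$. Structural substitution $t[\alpha:=\beta E]$ for a context $E ::= \Box \mid E\,t \mid \mathsf{S}\,E \mid \mathsf{nrec}\ r\ s\ E$ is homomorphic (capture-avoiding) except $([\alpha]u)[\alpha:=\beta E]:=[\beta]E[u[\alpha:=\beta E]]$. Reduction of $\lambda\mu\mathrm{T}$ is the compatible closure of: $(\lambda x.t)r\to t[x:=r]$; $\mathsf{S}(\mu\alpha.c)\to\mu\alpha.c[\alpha:=\alpha(\mathsf{S}\,\Box)]$; $(\mu\alpha.c)s\to\mu\alpha.c[\alpha:=\alpha(\Box\,s)]$; $\mu\alpha.[\alpha]t\to t$ if $\alpha\notin FCV(t)$; $[\alpha]\mu\beta.c\to c[\beta:=\alpha\,\Box]$; $\mathsf{nrec}\ r\ s\ 0\to r$; $\mathsf{nrec}\ r\ s\ (\mathsf{S}\,\underline{n})\to s\ \underline{n}\ (\mathsf{nrec}\ r\ s\ \underline{n})$; $\mathsf{nrec}\ r\ s\ (\mu\alpha.c)\to\mu\alpha.c[\alpha:=\alpha(\mathsf{nrec}\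 r\ s\ \Box)]$; conversion $=$ is its equivalence closure. Gödel's T ($\lambda\mathrm{T}$) is the $\mu$-free fragment with typing rules (var),(lambda),(app),(zero),(suc),(nrec) (no $\Delta$) and reduction the compatible closure of $(\lambda x.t)r\to t[x:=r]$, $\mathsf{nrec}\ r\ s\ 0\to r$, $\mathsf{nrec}\ r\ s\ (\mathsf{S}\,t)\to s\ t\ (\mathsf{nrec}\ r\ s\ t)$, with conversion $=$ its equivalence closure. A function $f:\mathbb{N}^n\to\mathbb{N}$ is representable in a system if there is a closed term $t$ of type $\mathbb{N}^n\to\mathbb{N}$ (i.e. $\mathbb{N}\to\dots\to\mathbb{N}\to\mathbb{N}$) with $t\,\underline{m_1}\cdots\underline{m_n}=\underline{f(m_1,\dots,m_n)}$ for all $m_1,\dots,m_n\in\mathbb{N}$. *)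

theory Defs
  imports Main
begin

text \<open>Terms use de Bruijn indices: lambda-variables and mu-variables are two separate
  index spaces. Terms are Church-style (binders and nrec carry type annotations).\<close>

datatype ty = Nat | Arr ty ty

fun cod :: "ty \<Rightarrow> ty" where
  "cod (Arr a b) = b"
| "cod Nat = Nat"

datatype trm =
    LVar nat
  | LLam ty trm
  | LApp trm trm
  | LMu ty cmd
  | LZero
  | LSuc trm
  | LNrec ty trm trm trm
and cmd = LPass nat trm

primrec liftl :: "nat \<Rightarrow> trm \<Rightarrow> trm" and liftlc :: "nat \<Rightarrow> cmd \<Rightarrow> cmd" where
  "liftl k (LVar i) = LVar (if i < k then i else Suc i)"
| "liftl k (LLam \<rho> t) = LLam \<rho> (liftl (Suc k) t)"
| "liftl k (LApp t s) = LApp (liftl k t) (liftl k s)"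
| "liftl k (LMu \<rho> c) = LMu \<rho> (liftlc k c)"
| "liftl k LZero = LZero"
| "liftl k (LSuc t) = LSuc (liftl k t)"
| "liftl k (LNrec \<rho> r s t) = LNrec \<rho> (liftl k r) (liftl k s) (liftl k t)"
| "liftlc k (LPass i t) = LPass i (liftl k t)"

primrec liftm :: "nat \<Rightarrow> trm \<Rightarrow> trm" and liftmc :: "nat \<Rightarrow> cmd \<Rightarrow> cmd" where
  "liftm k (LVar i) = LVar i"
| "liftm k (LLam \<rho> t) = LLam \<rho> (liftm k t)"
| "liftm k (LApp t s) = LApp (liftm k t) (liftm k s)"
| "liftm k (LMu \<rho> c) = LMu \<rho> (liftmc (Suc k) c)"
| "liftm k LZero = LZero"
| "liftm k (LSuc t) = LSuc (liftm k t)"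
| "liftm k (LNrec \<rho> r s t) = LNrec \<rho> (liftm k r) (liftm k s) (liftm k t)"
| "liftmc k (LPass i t) = LPass (if i < k then i else Suc i) (liftm k t)"

text \<open>Lowering of free mu-variables with index > k (used when mu-variable k has vanished)\<close>
primrec lowerm :: "nat \<Rightarrow> trm \<Rightarrow> trm" and lowermc :: "nat \<Rightarrow> cmd \<Rightarrow> cmd" where
  "lowerm k (LVar i) = LVar i"
| "lowerm k (LLam \<rho> t) = LLam \<rho> (lowerm k t)"
| "lowerm k (LApp t s) = LApp (lowerm k t) (lowerm k s)"
| "lowerm k (LMu \<rho> c) = LMu \<rho> (lowermc (Suc k) c)"
| "lowerm k LZero = LZero"
| "lowerm k (LSuc t) = LSuc (lowerm k t)"
| "lowerm k (LNrec \<rho> r s t) = LNrec \<rho> (lowerm k r) (lowerm k s) (lowerm k t)"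
| "lowermc k (LPass i t) = LPass (if k < i then i - 1 else i) (lowerm k t)"

primrec mfree :: "nat \<Rightarrow> trm \<Rightarrow> bool" and mfreec :: "nat \<Rightarrow> cmd \<Rightarrow> bool" where
  "mfree k (LVar i) = False"
| "mfree k (LLam \<rho> t) = mfree k t"
| "mfree k (LApp t s) = (mfree k t \<or> mfree k s)"
| "mfree k (LMu \<rho> c) = mfreec (Suc k) c"
| "mfree k LZero = False"
| "mfree k (LSuc t) = mfree k t"
| "mfree k (LNrec \<rho> r s t) = (mfree k r \<or> mfree k s \<or> mfree k t)"
| "mfreec k (LPass i t) = (i = k \<or> mfree k t)"

primrec substl :: "nat \<Rightarrow> trm \<Rightarrow> trm \<Rightarrow> trm" and substlc :: "nat \<Rightarrow> trm \<Rightarrow> cmd \<Rightarrow> cmd" where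
  "substl k s (LVar i) = (if i = k then s else if k < i then LVar (i - 1) else LVar i)"
| "substl k s (LLam \<rho> t) = LLam \<rho> (substl (Suc k) (liftl 0 s) t)"
| "substl k s (LApp t u) = LApp (substl k s t) (substl k s u)"
| "substl k s (LMu \<rho> c) = LMu \<rho> (substlc k (liftm 0 s) c)"
| "substl k s LZero = LZero"
| "substl k s (LSuc t) = LSuc (substl k s t)"
| "substl k s (LNrec \<rho> r u t) = LNrec \<rho> (substl k s r) (substl k s u) (substl k s t)"
| "substlc k s (LPass i t) = LPass i (substl k s t)"

datatype ctx = Hole | CApp ctx trm | CSuc ctx | CNrec ty trm trm ctx

primrec plug :: "ctx \<Rightarrow> trm \<Rightarrow> trm" where
  "plug Hole u = u"
| "plug (CApp E t) u = LApp (plug E u) t"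
| "plug (CSuc E) u = LSuc (plug E u)"
| "plug (CNrec \<rho> r s E) u = LNrec \<rho> r s (plug E u)"

primrec ctx_liftl :: "nat \<Rightarrow> ctx \<Rightarrow> ctx" where
  "ctx_liftl k Hole = Hole"
| "ctx_liftl k (CApp E t) = CApp (ctx_liftl k E) (liftl k t)"
| "ctx_liftl k (CSuc E) = CSuc (ctx_liftl k E)"
| "ctx_liftl k (CNrec \<rho> r s E) = CNrec \<rho> (liftl k r) (liftl k s) (ctx_liftl k E)"

primrec ctx_liftm :: "nat \<Rightarrow> ctx \<Rightarrow> ctx" where
  "ctx_liftm k Hole = Hole"
| "ctx_liftm k (CApp E t) = CApp (ctx_liftm k E) (liftm k t)"
| "ctx_liftm k (CSuc E) = CSuc (ctx_liftm k E)"
| "ctx_liftm k (CNrec \<rho> r s E) = CNrec \<rho> (liftm k r) (liftm k s) (ctx_liftm k E)"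

text \<open>Structural substitution t[alpha_k := beta_j E]: homomorphic except
  ([k]u)[k := j E] = [j] E[u[k := j E]]; no renumbering of other mu-variables.\<close>
primrec mstruct :: "nat \<Rightarrow> nat \<Rightarrow> ctx \<Rightarrow> trm \<Rightarrow> trm"
  and mstructc :: "nat \<Rightarrow> nat \<Rightarrow> ctx \<Rightarrow> cmd \<Rightarrow> cmd" where
  "mstruct k j E (LVar i) = LVar i"
| "mstruct k j E (LLam \<rho> t) = LLam \<rho> (mstruct k j (ctx_liftl 0 E) t)"
| "mstruct k j E (LApp t s) = LApp (mstruct k j E t) (mstruct k j E s)"
| "mstruct k j E (LMu \<rho> c) = LMu \<rho> (mstructc (Suc k) (Suc j) (ctx_liftm 0 E) c)"
| "mstruct k j E LZero = LZero"
| "mstruct k j E (LSuc t) = LSuc (mstruct k j E t)"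
| "mstruct k j E (LNrec \<rho> r s t) =
     LNrec \<rho> (mstruct k j E r) (mstruct k j E s) (mstruct k j E t)"
| "mstructc k j E (LPass i t) =
     (if i = k then LPass j (plug E (mstruct k j E t)) else LPass i (mstruct k j E t))"

primrec numl :: "nat \<Rightarrow> trm" where
  "numl 0 = LZero"
| "numl (Suc n) = LSuc (numl n)"

text \<open>Typing: Gamma (lambda-variables) and Delta (mu-variables) are lists indexed by de Bruijn index.\<close>
inductive typl :: "ty list \<Rightarrow> ty list \<Rightarrow> trm \<Rightarrow> ty \<Rightarrow> bool"
  and typlc :: "ty list \<Rightarrow> ty list \<Rightarrow> cmd \<Rightarrow> bool" where
  var: "i < length \<Gamma> \<Longrightarrow> \<Gamma> ! i = \<rho> \<Longrightarrow> typl \<Gamma> \<Delta> (LVar i) \<rho>"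
| lam: "typl (\<sigma> # \<Gamma>) \<Delta> t \<tau> \<Longrightarrow> typl \<Gamma> \<Delta> (LLam \<sigma> t) (Arr \<sigma> \<tau>)"
| app: "typl \<Gamma> \<Delta> t (Arr \<sigma> \<tau>) \<Longrightarrow> typl \<Gamma> \<Delta> s \<sigma> \<Longrightarrow> typl \<Gamma> \<Delta> (LApp t s) \<tau>"
| zero: "typl \<Gamma> \<Delta> LZero Nat"
| suc: "typl \<Gamma> \<Delta> t Nat \<Longrightarrow> typl \<Gamma> \<Delta> (LSuc t) Nat"
| nrec: "typl \<Gamma> \<Delta> r \<rho> \<Longrightarrow> typl \<Gamma> \<Delta> s (Arr Nat (Arr \<rho> \<rho>)) \<Longrightarrow> typl \<Gamma> \<Delta> t Nat
         \<Longrightarrow> typl \<Gamma> \<Delta> (LNrec \<rho> r s t) \<rho>"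
| activate: "typlc \<Gamma> (\<rho> # \<Delta>) c \<Longrightarrow> typl \<Gamma> \<Delta> (LMu \<rho> c) \<rho>"
| passivate: "typl \<Gamma> \<Delta> t \<rho> \<Longrightarrow> i < length \<Delta> \<Longrightarrow> \<Delta> ! i = \<rho> \<Longrightarrow> typlc \<Gamma> \<Delta> (LPass i t)"

inductive stepl :: "trm \<Rightarrow> trm \<Rightarrow> bool" and steplc :: "cmd \<Rightarrow> cmd \<Rightarrow> bool" where
  beta: "stepl (LApp (LLam \<rho> t) r) (substl 0 r t)"
| suc_mu: "stepl (LSuc (LMu \<rho> c)) (LMu \<rho> (mstructc 0 0 (CSuc Hole) c))"
| app_mu: "stepl (LApp (LMu \<rho> c) s) (LMu (cod \<rho>) (mstructc 0 0 (CApp Hole (liftm 0 s)) c))"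
| mu_eta: "\<not> mfree 0 t \<Longrightarrow> stepl (LMu \<rho> (LPass 0 t)) (lowerm 0 t)"
| pass_mu: "steplc (LPass a (LMu \<rho> c)) (lowermc 0 (mstructc 0 (Suc a) Hole c))"
| nrec_zero: "stepl (LNrec \<rho> r s LZero) r"
| nrec_suc: "stepl (LNrec \<rho> r s (LSuc (numl n))) (LApp (LApp s (numl n)) (LNrec \<rho> r s (numl n)))"
| nrec_mu: "stepl (LNrec \<rho> r s (LMu \<sigma> c))
     (LMu \<rho> (mstructc 0 0 (CNrec \<rho> (liftm 0 r) (liftm 0 s) Hole) c))"
| c_lam: "stepl t t' \<Longrightarrow> stepl (LLam \<rho> t) (LLam \<rho> t')"
| c_appl: "stepl t t' \<Longrightarrow> stepl (LApp t s) (LApp t' s)"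
| c_appr: "stepl s s' \<Longrightarrow> stepl (LApp t s) (LApp t s')"
| c_mu: "steplc c c' \<Longrightarrow> stepl (LMu \<rho> c) (LMu \<rho> c')"
| c_suc: "stepl t t' \<Longrightarrow> stepl (LSuc t) (LSuc t')"
| c_nrec1: "stepl r r' \<Longrightarrow> stepl (LNrec \<rho> r s t) (LNrec \<rho> r' s t)"
| c_nrec2: "stepl s s' \<Longrightarrow> stepl (LNrec \<rho> r s t) (LNrec \<rho> r s' t)"
| c_nrec3: "stepl t t' \<Longrightarrow> stepl (LNrec \<rho> r s t) (LNrec \<rho> r s t')"
| c_pass: "stepl t t' \<Longrightarrow> steplc (LPass i t) (LPass i t')"

definition convl :: "trm \<Rightarrow> trm \<Rightarrow> bool" where
  "convl = equivclp stepl"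

datatype tm =
    TVar nat
  | TLam ty tm
  | TApp tm tm
  | TZero
  | TSuc tm
  | TNrec ty tm tm tm

primrec liftT :: "nat \<Rightarrow> tm \<Rightarrow> tm" where
  "liftT k (TVar i) = TVar (if i < k then i else Suc i)"
| "liftT k (TLam \<rho> t) = TLam \<rho> (liftT (Suc k) t)"
| "liftT k (TApp t s) = TApp (liftT k t) (liftT k s)"
| "liftT k TZero = TZero"
| "liftT k (TSuc t) = TSuc (liftT k t)"
| "liftT k (TNrec \<rho> r s t) = TNrec \<rho> (liftT k r) (liftT k s) (liftT k t)"

primrec substT :: "nat \<Rightarrow> tm \<Rightarrow> tm \<Rightarrow> tm" where
  "substT k s (TVar i) = (if i = k then s else if k < i then TVar (i - 1) else TVar i)"
| "substT k s (TLam \<rho> t) = TLam \<rho> (substT (Suc k) (liftT 0 s) t)"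
| "substT k s (TApp t u) = TApp (substT k s t) (substT k s u)"
| "substT k s TZero = TZero"
| "substT k s (TSuc t) = TSuc (substT k s t)"
| "substT k s (TNrec \<rho> r u t) = TNrec \<rho> (substT k s r) (substT k s u) (substT k s t)"

primrec numT :: "nat \<Rightarrow> tm" where
  "numT 0 = TZero"
| "numT (Suc n) = TSuc (numT n)"

inductive typT :: "ty list \<Rightarrow> tm \<Rightarrow> ty \<Rightarrow> bool" where
  var: "i < length \<Gamma> \<Longrightarrow> \<Gamma> ! i = \<rho> \<Longrightarrow> typT \<Gamma> (TVar i) \<rho>"
| lam: "typT (\<sigma> # \<Gamma>) t \<tau> \<Longrightarrow> typT \<Gamma> (TLam \<sigma> t) (Arr \<sigma> \<tau>)"
| app: "typT \<Gamma> t (Arr \<sigma> \<tau>) \<Longrightarrow> typT \<Gamma> s \<sigma> \<Longrightarrow> typT \<Gamma> (TApp t s) \<tau>"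
| zero: "typT \<Gamma> TZero Nat"
| suc: "typT \<Gamma> t Nat \<Longrightarrow> typT \<Gamma> (TSuc t) Nat"
| nrec: "typT \<Gamma> r \<rho> \<Longrightarrow> typT \<Gamma> s (Arr Nat (Arr \<rho> \<rho>)) \<Longrightarrow> typT \<Gamma> t Nat
         \<Longrightarrow> typT \<Gamma> (TNrec \<rho> r s t) \<rho>"

inductive stepT :: "tm \<Rightarrow> tm \<Rightarrow> bool" where
  beta: "stepT (TApp (TLam \<rho> t) r) (substT 0 r t)"
| nrec_zero: "stepT (TNrec \<rho> r s TZero) r"
| nrec_suc: "stepT (TNrec \<rho> r s (TSuc t)) (TApp (TApp s t) (TNrec \<rho> r s t))"
| c_lam: "stepT t t' \<Longrightarrow> stepT (TLam \<rho> t) (TLam \<rho> t')"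
| c_appl: "stepT t t' \<Longrightarrow> stepT (TApp t s) (TApp t' s)"
| c_appr: "stepT s s' \<Longrightarrow> stepT (TApp t s) (TApp t s')"
| c_suc: "stepT t t' \<Longrightarrow> stepT (TSuc t) (TSuc t')"
| c_nrec1: "stepT r r' \<Longrightarrow> stepT (TNrec \<rho> r s t) (TNrec \<rho> r' s t)"
| c_nrec2: "stepT s s' \<Longrightarrow> stepT (TNrec \<rho> r s t) (TNrec \<rho> r s' t)"
| c_nrec3: "stepT t t' \<Longrightarrow> stepT (TNrec \<rho> r s t) (TNrec \<rho> r s t')"

definition convT :: "tm \<Rightarrow> tm \<Rightarrow> bool" where
  "convT = equivclp stepT"

primrec natArr :: "nat \<Rightarrow> ty" where
  "natArr 0 = Nat"
| "natArr (Suc n) = Arr Nat (natArr n)"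

definition representable_lmT :: "nat \<Rightarrow> (nat list \<Rightarrow> nat) \<Rightarrow> bool" where
  "representable_lmT n f \<longleftrightarrow> (\<exists>t. typl [] [] t (natArr n) \<and>
     (\<forall>ms. length ms = n \<longrightarrow> convl (foldl LApp t (map numl ms)) (numl (f ms))))"

definition representable_T :: "nat \<Rightarrow> (nat list \<Rightarrow> nat) \<Rightarrow> bool" where
  "representable_T n f \<longleftrightarrow> (\<exists>t. typT [] t (natArr n) \<and>
     (\<forall>ms. length ms = n \<longrightarrow> convT (foldl TApp t (map numT ms)) (numT (f ms))))"

end

theory Submission
  imports Defs
begin

lemma lift_lift:
  "i \<le> k \<Longrightarrow> liftT (Suc k) (liftT i t) = liftT i (liftT k t)"
  by (induct t arbitrary: i k) auto

lemma lift_subst [simp]: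
    "j \<le> i \<Longrightarrow> liftT i (substT j s t) = substT j (liftT i s) (liftT (Suc i) t)"
  by (induct t arbitrary: i j s)
    (simp_all add: diff_Suc lift_lift split: nat.split)

lemma lift_subst_lt:
    "i \<le> j \<Longrightarrow> liftT i (substT j s t) = substT (Suc j) (liftT i s) (liftT i t)"
  by (induct t arbitrary: i j s) (auto simp: lift_lift)

lemma subst_lift [simp]:
    "substT k s (liftT k t) = t"
  by (induct t arbitrary: k s) simp_all

lemma subst_subst:
    "i \<le> j \<Longrightarrow> substT i (substT j v u) (substT (Suc j) (liftT i v) t) = substT j v (substT i u t)"
  by (induct t arbitrary: i j u v)
    (simp_all add: diff_Suc lift_lift [symmetric] lift_subst_lt
      split: nat.split)

lemma subst_var_lift [simp]: "substT k (TVar k) (liftT (Suc k) t) = t"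
  by (induct t arbitrary: k) auto

lemma lift_numT [simp]: "liftT k (numT n) = numT n"
  by (induct n) auto
lemma subst_numT [simp]: "substT k u (numT n) = numT n"
  by (induct n) auto

lemma step_lift: "stepT a b \<Longrightarrow> stepT (liftT k a) (liftT k b)"
proof (induct a b arbitrary: k rule: stepT.induct)
  case (beta \<rho> t r)
  then show ?case using stepT.beta[of \<rho> "liftT (Suc k) t" "liftT k r"] by simp
qed (auto intro: stepT.intros)

lemma step_subst: "stepT a b \<Longrightarrow> stepT (substT k u a) (substT k u b)"
proof (induct a b arbitrary: k u rule: stepT.induct)
  case (beta \<rho> t r)
  then show ?case using stepT.beta[of \<rho> "substT (Suc k) (liftT 0 u) t" "substT k u r"]
    by (simp add: subst_subst[symmetric])
qed (auto intro: stepT.intros)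

lemma conv_map:
  assumes "\<And>a b. stepT a b \<Longrightarrow> stepT (f a) (f b)" "convT a b"
  shows "convT (f a) (f b)"
  using assms(2) unfolding convT_def
proof (induct rule: equivclp_induct)
  case base then show ?case by simp
next
  case (step y z) then show ?case
    by (meson assms(1) equivclp_into_equivclp)
qed

lemma conv_refl [simp]: "convT a a" by (simp add: convT_def)
lemma conv_sym: "convT a b \<Longrightarrow> convT b a" by (simp add: convT_def equivclp_sym)
lemma conv_trans [trans]: "convT a b \<Longrightarrow> convT b c \<Longrightarrow> convT a c"
  unfolding convT_def by (rule equivclp_trans)
lemma step_conv: "stepT a b \<Longrightarrow> convT a b" by (auto simp: convT_def)
lemma steps_conv: "stepT\<^sup>*\<^sup>* a b \<Longrightarrow> convT a b" by (simp add: convT_def rtranclp_into_equivclp)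

lemma conv_lift: "convT a b \<Longrightarrow> convT (liftT k a) (liftT k b)"
  by (rule conv_map[OF step_lift])
lemma conv_subst: "convT a b \<Longrightarrow> convT (substT k u a) (substT k u b)"
  by (rule conv_map[OF step_subst])
lemma conv_Lam: "convT a b \<Longrightarrow> convT (TLam \<rho> a) (TLam \<rho> b)"
  by (rule conv_map[OF stepT.c_lam])
lemma conv_Suc: "convT a b \<Longrightarrow> convT (TSuc a) (TSuc b)"
  by (rule conv_map[OF stepT.c_suc])
lemma conv_App: "convT a b \<Longrightarrow> convT c d \<Longrightarrow> convT (TApp a c) (TApp b d)"
proof -
  assume "convT a b" "convT c d"
  have "convT (TApp a c) (TApp b c)" by (rule conv_map[OF stepT.c_appl \<open>convT a b\<close>])
  also have "convT (TApp b c) (TApp b d)" by (rule conv_map[OF stepT.c_appr \<open>convT c d\<close>])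
  finally show ?thesis .
qed
lemma conv_Nrec: "convT a b \<Longrightarrow> convT c d \<Longrightarrow> convT e g \<Longrightarrow> convT (TNrec \<rho> a c e) (TNrec \<rho> b d g)"
proof -
  assume "convT a b" "convT c d" "convT e g"
  have "convT (TNrec \<rho> a c e) (TNrec \<rho> b c e)" by (rule conv_map[OF stepT.c_nrec1 \<open>convT a b\<close>])
  also have "convT (TNrec \<rho> b c e) (TNrec \<rho> b d e)" by (rule conv_map[OF stepT.c_nrec2 \<open>convT c d\<close>])
  also have "convT (TNrec \<rho> b d e) (TNrec \<rho> b d g)" by (rule conv_map[OF stepT.c_nrec3 \<open>convT e g\<close>])
  finally show ?thesis .
qed

lemma conv_beta: "convT (TApp (TLam \<rho> t) r) (substT 0 r t)"
  by (rule step_conv, rule stepT.beta)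



section \<open>Confluence of T\<close>

inductive par :: "tm \<Rightarrow> tm \<Rightarrow> bool" where
  p_var: "par (TVar i) (TVar i)"
| p_lam: "par t t' \<Longrightarrow> par (TLam \<rho> t) (TLam \<rho> t')"
| p_app: "par t t' \<Longrightarrow> par r r' \<Longrightarrow> par (TApp t r) (TApp t' r')"
| p_zero: "par TZero TZero"
| p_suc: "par t t' \<Longrightarrow> par (TSuc t) (TSuc t')"
| p_nrec: "par r r' \<Longrightarrow> par s s' \<Longrightarrow> par t t' \<Longrightarrow> par (TNrec \<rho> r s t) (TNrec \<rho> r' s' t')"
| p_beta: "par t t' \<Longrightarrow> par r r' \<Longrightarrow> par (TApp (TLam \<rho> t) r) (substT 0 r' t')"
| p_nz: "par r r' \<Longrightarrow> par (TNrec \<rho> r s TZero) r'"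
| p_ns: "par r r' \<Longrightarrow> par s s' \<Longrightarrow> par t t' \<Longrightarrow>
    par (TNrec \<rho> r s (TSuc t)) (TApp (TApp s' t') (TNrec \<rho> r' s' t'))"

lemma par_refl [simp, intro]: "par t t"
  by (induct t) (auto intro: par.intros)

lemma par_lift: "par t t' \<Longrightarrow> par (liftT k t) (liftT k t')"
proof (induct t t' arbitrary: k rule: par.induct)
  case (p_beta t t' r r' \<rho>)
  then show ?case using par.p_beta[of "liftT (Suc k) t" "liftT (Suc k) t'" "liftT k r" "liftT k r'" \<rho>] by simp
qed (auto intro: par.intros)

lemma par_subst: "par t t' \<Longrightarrow> par u u' \<Longrightarrow> par (substT k u t) (substT k u' t')"
proof (induct t t' arbitrary: k u u' rule: par.induct)
  case (p_var i)
  then show ?case by (auto intro: par.intros)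
next
  case (p_lam t t' \<rho>)
  then show ?case using par_lift by (auto intro!: par.p_lam)
next
  case (p_beta t t' r r' \<rho>)
  have "par (TApp (TLam \<rho> (substT (Suc k) (liftT 0 u) t)) (substT k u r))
           (substT 0 (substT k u' r') (substT (Suc k) (liftT 0 u') t'))"
    using p_beta by (auto intro!: par.p_beta par_lift)
  then show ?case by (simp add: subst_subst[symmetric])
qed (auto intro: par.intros)

fun cd :: "tm \<Rightarrow> tm" where
  "cd (TVar i) = TVar i"
| "cd (TLam \<rho> t) = TLam \<rho> (cd t)"
| "cd (TApp (TLam \<rho> t) r) = substT 0 (cd r) (cd t)"
| "cd (TApp t r) = TApp (cd t) (cd r)"
| "cd TZero = TZero"
| "cd (TSuc t) = TSuc (cd t)"
| "cd (TNrec \<rho> r s TZero) = cd r"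
| "cd (TNrec \<rho> r s (TSuc t)) = TApp (TApp (cd s) (cd t)) (TNrec \<rho> (cd r) (cd s) (cd t))"
| "cd (TNrec \<rho> r s t) = TNrec \<rho> (cd r) (cd s) (cd t)"

inductive_cases parE_lam: "par (TLam \<rho> t) u"
inductive_cases parE_suc: "par (TSuc t) u"
inductive_cases parE_zero: "par TZero u"

lemma par_cd: "par t u \<Longrightarrow> par u (cd t)"
proof (induct t u rule: par.induct)
  case (p_app t t' r r')
  show ?case
  proof (cases t)
    case (TLam \<rho> b)
    with p_app obtain b' where "t' = TLam \<rho> b'" "par b b'" by (auto elim: parE_lam)
    moreover with p_app TLam have "par b' (cd b)" by (auto elim: parE_lam)
    ultimately show ?thesis using p_app TLam by (auto intro: par.intros)
  qed (use p_app in \<open>auto intro: par.intros\<close>)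
next
  case (p_nrec r r' s s' t t' \<rho>)
  show ?case
  proof (cases t)
    case TZero
    with p_nrec have "t' = TZero" by (auto elim: parE_zero)
    then show ?thesis using p_nrec TZero by (auto intro: par.intros)
  next
    case (TSuc a)
    with p_nrec obtain a' where "t' = TSuc a'" "par a a'" by (auto elim: parE_suc)
    moreover with p_nrec TSuc have "par a' (cd a)" by (auto elim: parE_suc)
    ultimately show ?thesis using p_nrec TSuc by (auto intro: par.intros)
  qed (use p_nrec in \<open>auto intro: par.intros\<close>)
next
  case (p_beta t t' r r' \<rho>)
  then show ?case by (auto intro: par_subst)
qed (auto intro: par.intros)

lemma step_par: "stepT a b \<Longrightarrow> par a b"
  by (induct rule: stepT.induct) (auto intro: par.intros)

lemma steps_App: "stepT\<^sup>*\<^sup>* a b \<Longrightarrow> stepT\<^sup>*\<^sup>* c d \<Longrightarrow> stepT\<^sup>*\<^sup>* (TApp a c) (TApp b d)"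
proof -
  assume a: "stepT\<^sup>*\<^sup>* a b" and c: "stepT\<^sup>*\<^sup>* c d"
  from a have "stepT\<^sup>*\<^sup>* (TApp a c) (TApp b c)"
    by induct (auto intro: rtranclp.rtrancl_into_rtrancl stepT.c_appl)
  moreover from c have "stepT\<^sup>*\<^sup>* (TApp b c) (TApp b d)"
    by induct (auto intro: rtranclp.rtrancl_into_rtrancl stepT.c_appr)
  ultimately show ?thesis by auto
qed

lemma steps_Lam: "stepT\<^sup>*\<^sup>* a b \<Longrightarrow> stepT\<^sup>*\<^sup>* (TLam \<rho> a) (TLam \<rho> b)"
  by (induct rule: rtranclp_induct) (auto intro: rtranclp.rtrancl_into_rtrancl stepT.c_lam)
lemma steps_Suc: "stepT\<^sup>*\<^sup>* a b \<Longrightarrow> stepT\<^sup>*\<^sup>* (TSuc a) (TSuc b)"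
  by (induct rule: rtranclp_induct) (auto intro: rtranclp.rtrancl_into_rtrancl stepT.c_suc)
lemma steps_Nrec: "stepT\<^sup>*\<^sup>* a b \<Longrightarrow> stepT\<^sup>*\<^sup>* c d \<Longrightarrow> stepT\<^sup>*\<^sup>* e g \<Longrightarrow>
   stepT\<^sup>*\<^sup>* (TNrec \<rho> a c e) (TNrec \<rho> b d g)"
proof -
  assume a: "stepT\<^sup>*\<^sup>* a b" and c: "stepT\<^sup>*\<^sup>* c d" and e: "stepT\<^sup>*\<^sup>* e g"
  from a have 1: "stepT\<^sup>*\<^sup>* (TNrec \<rho> a c e) (TNrec \<rho> b c e)"
    by induct (auto intro: rtranclp.rtrancl_into_rtrancl stepT.c_nrec1)
  from c have 2: "stepT\<^sup>*\<^sup>* (TNrec \<rho> b c e) (TNrec \<rho> b d e)"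
    by induct (auto intro: rtranclp.rtrancl_into_rtrancl stepT.c_nrec2)
  from e have 3: "stepT\<^sup>*\<^sup>* (TNrec \<rho> b d e) (TNrec \<rho> b d g)"
    by induct (auto intro: rtranclp.rtrancl_into_rtrancl stepT.c_nrec3)
  from 1 2 3 show ?thesis by auto
qed

lemma steps_subst: "stepT\<^sup>*\<^sup>* a b \<Longrightarrow> stepT\<^sup>*\<^sup>* u u' \<Longrightarrow> stepT\<^sup>*\<^sup>* (substT k u a) (substT k u' b)"
proof -
  assume a: "stepT\<^sup>*\<^sup>* a b" and u: "stepT\<^sup>*\<^sup>* u u'"
  have 1: "stepT\<^sup>*\<^sup>* (substT k u a) (substT k u b)" using a
    by induct (auto intro: rtranclp.rtrancl_into_rtrancl step_subst)
  have 2: "stepT\<^sup>*\<^sup>* (substT k u t) (substT k u' t)" for t using u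
  proof (induct t arbitrary: k u u')
    case (TVar x)
    then show ?case by auto
  next
    case (TLam x1 t)
    have "stepT\<^sup>*\<^sup>* (liftT 0 u) (liftT 0 u')" using TLam(2)
      by induct (auto intro: rtranclp.rtrancl_into_rtrancl step_lift)
    then show ?case using TLam by (auto intro: steps_Lam)
  qed (auto intro: steps_App steps_Suc steps_Nrec)
  from 1 2[of b] show ?thesis by (meson rtranclp_trans)
qed

lemma par_steps: "par a b \<Longrightarrow> stepT\<^sup>*\<^sup>* a b"
proof (induct rule: par.induct)
  case (p_beta t t' r r' \<rho>)
  have "stepT\<^sup>*\<^sup>* (TApp (TLam \<rho> t) r) (TApp (TLam \<rho> t') r')"
    using p_beta by (auto intro: steps_App steps_Lam)
  also have "stepT (TApp (TLam \<rho> t') r') (substT 0 r' t')" by (rule stepT.beta)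
  finally show ?case .
next
  case (p_nz r r' \<rho> s)
  have "stepT (TNrec \<rho> r s TZero) r" by (rule stepT.nrec_zero)
  then show ?case using p_nz by auto
next
  case (p_ns r r' s s' t t' \<rho>)
  have "stepT (TNrec \<rho> r s (TSuc t)) (TApp (TApp s t) (TNrec \<rho> r s t))" by (rule stepT.nrec_suc)
  also have "stepT\<^sup>*\<^sup>* (TApp (TApp s t) (TNrec \<rho> r s t)) (TApp (TApp s' t') (TNrec \<rho> r' s' t'))"
    using p_ns by (auto intro: steps_App steps_Nrec)
  finally show ?case .
qed (auto intro: steps_App steps_Lam steps_Suc steps_Nrec)

lemma strip: assumes "par\<^sup>*\<^sup>* a c" "par a b" shows "\<exists>d. par\<^sup>*\<^sup>* b d \<and> par c d"
  using assms
proof (induct rule: rtranclp_induct)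
  case base then show ?case by auto
next
  case (step y z)
  then obtain d where "par\<^sup>*\<^sup>* b d" "par y d" by blast
  then have "par d (cd y)" "par z (cd y)" using step par_cd by blast+
  then show ?case using \<open>par\<^sup>*\<^sup>* b d\<close> by (meson rtranclp.rtrancl_into_rtrancl)
qed

lemma par_confl: assumes "par\<^sup>*\<^sup>* a b" "par\<^sup>*\<^sup>* a c" shows "\<exists>d. par\<^sup>*\<^sup>* b d \<and> par\<^sup>*\<^sup>* c d"
  using assms
proof (induct arbitrary: c rule: rtranclp_induct)
  case base then show ?case by auto
next
  case (step y z)
  then obtain d where "par\<^sup>*\<^sup>* y d" "par\<^sup>*\<^sup>* c d" by blast
  from strip[OF this(1) step(2)] obtain e where "par\<^sup>*\<^sup>* z e" "par d e" by blast
  then show ?case using \<open>par\<^sup>*\<^sup>* c d\<close> by (meson rtranclp.rtrancl_into_rtrancl)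
qed

lemma pars_steps: "par\<^sup>*\<^sup>* a b \<Longrightarrow> stepT\<^sup>*\<^sup>* a b"
  by (induct rule: rtranclp_induct) (auto dest: par_steps)
lemma steps_pars: "stepT\<^sup>*\<^sup>* a b \<Longrightarrow> par\<^sup>*\<^sup>* a b"
  by (induct rule: rtranclp_induct) (auto dest: step_par intro: rtranclp.rtrancl_into_rtrancl)

lemma confl: "stepT\<^sup>*\<^sup>* a b \<Longrightarrow> stepT\<^sup>*\<^sup>* a c \<Longrightarrow> \<exists>d. stepT\<^sup>*\<^sup>* b d \<and> stepT\<^sup>*\<^sup>* c d"
  by (meson par_confl pars_steps steps_pars)

lemma church_rosser: "convT a b \<Longrightarrow> \<exists>d. stepT\<^sup>*\<^sup>* a d \<and> stepT\<^sup>*\<^sup>* b d"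
  unfolding convT_def
proof (induct rule: equivclp_induct)
  case base then show ?case by auto
next
  case (step y z)
  then obtain d where d: "stepT\<^sup>*\<^sup>* a d" "stepT\<^sup>*\<^sup>* y d" by blast
  from step(2) show ?case
  proof
    assume "stepT y z"
    then obtain e where "stepT\<^sup>*\<^sup>* d e" "stepT\<^sup>*\<^sup>* z e" using confl[OF d(2)] by blast
    then show ?thesis using d by (meson rtranclp_trans)
  next
    assume "stepT z y"
    then show ?thesis using d by (meson converse_rtranclp_into_rtranclp)
  qed
qed

lemma numT_normal: "\<not> stepT (numT n) x"
proof (induct n arbitrary: x)
  case 0 then show ?case by (auto elim: stepT.cases)
next
  case (Suc n) then show ?case by (auto elim: stepT.cases)
qed

lemma numT_steps: "stepT\<^sup>*\<^sup>* (numT n) x \<Longrightarrow> x = numT n"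
  by (induct rule: rtranclp_induct) (auto simp: numT_normal)

lemma conv_num_steps: "convT a (numT n) \<Longrightarrow> stepT\<^sup>*\<^sup>* a (numT n)"
  using church_rosser numT_steps by blast

section \<open>Erasure\<close>

primrec eraseT :: "tm \<Rightarrow> tm" where
  "eraseT (TVar i) = TVar i"
| "eraseT (TLam \<rho> t) = TLam Nat (eraseT t)"
| "eraseT (TApp t s) = TApp (eraseT t) (eraseT s)"
| "eraseT TZero = TZero"
| "eraseT (TSuc t) = TSuc (eraseT t)"
| "eraseT (TNrec \<rho> r s t) = TNrec Nat (eraseT r) (eraseT s) (eraseT t)"

lemma erase_lift [simp]: "eraseT (liftT k t) = liftT k (eraseT t)"
  by (induct t arbitrary: k) auto
lemma erase_subst [simp]: "eraseT (substT k u t) = substT k (eraseT u) (eraseT t)"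
  by (induct t arbitrary: k u) auto
lemma erase_numT [simp]: "eraseT (numT n) = numT n"
  by (induct n) auto

lemma erase_eqs:
  "eraseT a = TVar i \<longleftrightarrow> a = TVar i"
  "eraseT a = TLam \<rho> x \<longleftrightarrow> (\<exists>\<sigma> a1. a = TLam \<sigma> a1 \<and> eraseT a1 = x \<and> \<rho> = Nat)"
  "eraseT a = TApp x y \<longleftrightarrow> (\<exists>a1 a2. a = TApp a1 a2 \<and> eraseT a1 = x \<and> eraseT a2 = y)"
  "eraseT a = TZero \<longleftrightarrow> a = TZero"
  "eraseT a = TSuc x \<longleftrightarrow> (\<exists>a1. a = TSuc a1 \<and> eraseT a1 = x)"
  "eraseT a = TNrec \<rho> x y z \<longleftrightarrow> (\<exists>\<sigma> a1 a2 a3. a = TNrec \<sigma> a1 a2 a3 \<and> eraseT a1 = x \<and> eraseT a2 = y \<and> eraseT a3 = z \<and> \<rho> = Nat)"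
  by (cases a; auto)+

lemma erase_step_lift: "stepT x b \<Longrightarrow> eraseT a = x \<Longrightarrow> \<exists>a'. stepT a a' \<and> eraseT a' = b"
proof (induct x b arbitrary: a rule: stepT.induct)
  case (beta \<rho> t r)
  then show ?case by (auto simp: erase_eqs intro: stepT.intros)
next
  case (nrec_zero \<rho> r s)
  then show ?case by (auto simp: erase_eqs intro: stepT.intros)
next
  case (nrec_suc \<rho> r s t)
  then show ?case by (auto simp: erase_eqs intro: stepT.intros)
qed (fastforce simp: erase_eqs intro: stepT.intros)+

lemma erase_steps_lift: "stepT\<^sup>*\<^sup>* (eraseT a) b \<Longrightarrow> \<exists>a'. stepT\<^sup>*\<^sup>* a a' \<and> eraseT a' = b"
proof (induct rule: rtranclp_induct)
  case base then show ?case by auto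
next
  case (step y z)
  then obtain a' where "stepT\<^sup>*\<^sup>* a a'" "eraseT a' = y" by blast
  moreover obtain a'' where "stepT a' a''" "eraseT a'' = z" using erase_step_lift[OF step(2)] \<open>eraseT a' = y\<close> by blast
  ultimately have "stepT\<^sup>*\<^sup>* a a''" "eraseT a'' = z" by (auto intro: rtranclp.rtrancl_into_rtrancl)
  then show ?case by (intro exI conjI)
qed

lemma erase_eq_numT: "eraseT a = numT n \<Longrightarrow> a = numT n"
  by (induct n arbitrary: a) (auto simp: erase_eqs)

lemma conv_erase_num: "convT (eraseT a) (numT n) \<Longrightarrow> convT a (numT n)"
proof -
  assume "convT (eraseT a) (numT n)"
  then have "stepT\<^sup>*\<^sup>* (eraseT a) (numT n)" by (rule conv_num_steps)
  then obtain a' where "stepT\<^sup>*\<^sup>* a a'" "eraseT a' = numT n" using erase_steps_lift by blast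
  then show ?thesis using erase_eq_numT steps_conv by blast
qed



declare lift_subst[simp del]

lemma subst_lift_comm [simp]: "substT (Suc j) (liftT 0 u) (liftT 0 x) = liftT 0 (substT j u x)"
  by (simp add: lift_subst_lt)

declare lift_lift[simp]

definition KSe :: tm where
  "KSe = TLam Nat (TApp (TApp (TVar 0) (TLam Nat (TApp (TVar 0) (TVar 4))))
                       (TLam Nat (TApp (TApp (TVar 0) (TVar 3)) (TVar 2))))"

lemma lift_KSe [simp]: "3 \<le> k \<Longrightarrow> liftT k KSe = KSe"
  by (simp add: KSe_def)
lemma subst_KSe [simp]: "3 \<le> k \<Longrightarrow> substT k u KSe = KSe"
  by (simp add: KSe_def)

definition shft :: "tm \<Rightarrow> (nat \<Rightarrow> tm) \<Rightarrow> nat \<Rightarrow> tm" where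
  "shft x f i = (case i of 0 \<Rightarrow> x | Suc j \<Rightarrow> f j)"

lemma shft_simps [simp]: "shft x f 0 = x" "shft x f (Suc i) = f i"
  by (simp_all add: shft_def)

lemma shft_lift [simp]: "(\<lambda>i. liftT k (shft x g i)) = shft (liftT k x) (\<lambda>i. liftT k (g i))"
  by (rule ext, simp add: shft_def split: nat.split)
lemma shft_subst [simp]: "(\<lambda>i. substT k u (shft x g i)) = shft (substT k u x) (\<lambda>i. substT k u (g i))"
  by (rule ext, simp add: shft_def split: nat.split)

primrec etr :: "(nat \<Rightarrow> tm) \<Rightarrow> (nat \<Rightarrow> tm) \<Rightarrow> trm \<Rightarrow> tm \<Rightarrow> tm"
  and etrc :: "(nat \<Rightarrow> tm) \<Rightarrow> (nat \<Rightarrow> tm) \<Rightarrow> cmd \<Rightarrow> tm" where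
  "etr L M (LVar i) k = TApp (L i) k"
| "etr L M (LLam \<rho> t) k = TApp k (TLam Nat (TLam Nat
     (etr (shft (TVar 1) (\<lambda>i. liftT 0 (liftT 0 (L i)))) (\<lambda>i. liftT 0 (liftT 0 (M i))) t (TVar 0))))"
| "etr L M (LApp t s) k = etr L M t (TLam Nat (TApp (TApp (TVar 0)
     (TLam Nat (etr (\<lambda>i. liftT 0 (liftT 0 (L i))) (\<lambda>i. liftT 0 (liftT 0 (M i))) s (TVar 0)))) (liftT 0 k)))"
| "etr L M (LMu \<rho> c) k = etrc L (shft k M) c"
| "etr L M LZero k = TApp k TZero"
| "etr L M (LSuc t) k = etr L M t (TLam Nat (TApp (liftT 0 k) (TSuc (TVar 0))))"
| "etr L M (LNrec \<rho> r s t) k = etr L M t (TLam Nat (TApp (TNrec Nat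
     (TLam Nat (etr (\<lambda>i. liftT 0 (liftT 0 (L i))) (\<lambda>i. liftT 0 (liftT 0 (M i))) r (TVar 0)))
     (TLam Nat (TLam Nat (TLam Nat (etr (\<lambda>i. liftT 0 (liftT 0 (liftT 0 (liftT 0 (L i)))))
           (\<lambda>i. liftT 0 (liftT 0 (liftT 0 (liftT 0 (M i))))) s KSe))))
     (TVar 0)) (liftT 0 k)))"
| "etrc L M (LPass i t) = etr L M t (M i)"

lemma etr_lift:
  "liftT j (etr L M t k) = etr (\<lambda>i. liftT j (L i)) (\<lambda>i. liftT j (M i)) t (liftT j k)"
  "liftT j (etrc L M c) = etrc (\<lambda>i. liftT j (L i)) (\<lambda>i. liftT j (M i)) c"
  by (induct t and c arbitrary: j L M k and j L M) (simp_all add: numeral_eq_Suc)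

lemma etr_subst:
  "substT j u (etr L M t k) = etr (\<lambda>i. substT j u (L i)) (\<lambda>i. substT j u (M i)) t (substT j u k)"
  "substT j u (etrc L M c) = etrc (\<lambda>i. substT j u (L i)) (\<lambda>i. substT j u (M i)) c"
  by (induct t and c arbitrary: j u L M k and j u L M) (simp_all add: numeral_eq_Suc)

definition skip :: "nat \<Rightarrow> nat \<Rightarrow> nat" where "skip k i = (if i < k then i else Suc i)"
definition low :: "nat \<Rightarrow> nat \<Rightarrow> nat" where "low k i = (if k < i then i - 1 else i)"

lemma shft_skip [simp]: "(\<lambda>i. shft x g (skip (Suc k) i)) = shft x (\<lambda>i. g (skip k i))"
  by (rule ext, simp add: shft_def skip_def split: nat.split)
lemma shft_low [simp]: "(\<lambda>i. shft x g (low (Suc k) i)) = shft x (\<lambda>i. g (low k i))"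
  by (rule ext, simp add: shft_def low_def split: nat.split)

lemma etr_liftl:
  "etr L M (liftl k t) \<kappa> = etr (\<lambda>i. L (skip k i)) M t \<kappa>"
  "etrc L M (liftlc k c) = etrc (\<lambda>i. L (skip k i)) M c"
  by (induct t and c arbitrary: k L M \<kappa> and k L M) (simp_all add: skip_def[symmetric])

lemma etr_liftm:
  "etr L M (liftm k t) \<kappa> = etr L (\<lambda>i. M (skip k i)) t \<kappa>"
  "etrc L M (liftmc k c) = etrc L (\<lambda>i. M (skip k i)) c"
  by (induct t and c arbitrary: k L M \<kappa> and k L M) (simp_all add: skip_def[symmetric])

lemma etr_lowerm:
  "etr L M (lowerm k t) \<kappa> = etr L (\<lambda>i. M (low k i)) t \<kappa>"
  "etrc L M (lowermc k c) = etrc L (\<lambda>i. M (low k i)) c"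
  by (induct t and c arbitrary: k L M \<kappa> and k L M) (simp_all add: low_def[symmetric])

lemma etr_mfree:
  "\<not> mfree k t \<Longrightarrow> (\<forall>i. i \<noteq> k \<longrightarrow> M i = M' i) \<Longrightarrow> etr L M t \<kappa> = etr L M' t \<kappa>"
  "\<not> mfreec k c \<Longrightarrow> (\<forall>i. i \<noteq> k \<longrightarrow> M i = M' i) \<Longrightarrow> etrc L M c = etrc L M' c"
proof (induct t and c arbitrary: k L M M' \<kappa> and k L M M')
  case (LMu x1 x2)
  have "\<forall>i. i \<noteq> Suc k \<longrightarrow> shft \<kappa> M i = shft \<kappa> M' i"
    using LMu by (auto simp: shft_def split: nat.split)
  then show ?case using LMu by simp
next
  case (LApp t s)
  have "etr L M t \<kappa>' = etr L M' t \<kappa>'" for \<kappa>' using LApp(1)[of k M M'] LApp(3,4) by simp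
  moreover have "etr L' (\<lambda>i. liftT 0 (liftT 0 (M i))) s \<kappa>' = etr L' (\<lambda>i. liftT 0 (liftT 0 (M' i))) s \<kappa>'" for L' \<kappa>'
    using LApp(2)[of k "\<lambda>i. liftT 0 (liftT 0 (M i))" "\<lambda>i. liftT 0 (liftT 0 (M' i))"] LApp(3,4) by simp
  ultimately show ?case by simp
next
  case (LLam \<rho> t)
  show ?case using LLam(1)[of k "\<lambda>i. liftT 0 (liftT 0 (M i))" "\<lambda>i. liftT 0 (liftT 0 (M' i))"] LLam(2,3) by simp
next
  case (LSuc t)
  then show ?case by simp
next
  case (LNrec \<rho> r s t)
  have "etr L M t \<kappa>' = etr L M' t \<kappa>'" for \<kappa>' using LNrec(3)[of k M M'] LNrec(4,5) by simp
  moreover have "etr L' (\<lambda>i. liftT 0 (liftT 0 (M i))) r \<kappa>' = etr L' (\<lambda>i. liftT 0 (liftT 0 (M' i))) r \<kappa>'" for L' \<kappa>'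
    using LNrec(1)[of k "\<lambda>i. liftT 0 (liftT 0 (M i))" "\<lambda>i. liftT 0 (liftT 0 (M' i))"] LNrec(4,5) by simp
  moreover have "etr L' (\<lambda>i. liftT 0 (liftT 0 (liftT 0 (liftT 0 (M i))))) s \<kappa>' = etr L' (\<lambda>i. liftT 0 (liftT 0 (liftT 0 (liftT 0 (M' i))))) s \<kappa>'" for L' \<kappa>'
    using LNrec(2)[of k "\<lambda>i. liftT 0 (liftT 0 (liftT 0 (liftT 0 (M i))))" "\<lambda>i. liftT 0 (liftT 0 (liftT 0 (liftT 0 (M' i))))"] LNrec(4,5) by simp
  ultimately show ?case by simp
next
  case (LPass i t)
  then show ?case by (cases "i = k") auto
qed auto

lemma conv_shft: "convT x y \<Longrightarrow> \<forall>i. convT (M i) (M' i) \<Longrightarrow> \<forall>i. convT (shft x M i) (shft y M' i)"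
  by (auto simp: shft_def split: nat.split)

lemma etr_cong:
  "(\<forall>i. convT (M i) (M' i)) \<Longrightarrow> convT \<kappa> \<kappa>' \<Longrightarrow> convT (etr L M t \<kappa>) (etr L M' t \<kappa>')"
  "(\<forall>i. convT (M i) (M' i)) \<Longrightarrow> convT (etrc L M c) (etrc L M' c)"
proof (induct t and c arbitrary: L M M' \<kappa> \<kappa>' and L M M')
  case (LMu x1 x2)
  then show ?case using conv_shft by simp
qed (simp_all add: conv_App conv_Lam conv_lift conv_Nrec conv_Suc)

lemma etr_cong_k: "convT \<kappa> \<kappa>' \<Longrightarrow> convT (etr L M t \<kappa>) (etr L M t \<kappa>')"
  by (simp add: etr_cong)



lemma skip_0 [simp]: "skip 0 i = Suc i" by (simp add: skip_def)
lemma low_Suc [simp]: "low (Suc k) (Suc i) = Suc (low k i)" "low (Suc k) 0 = 0"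
  by (auto simp: low_def)
lemma low_0 [simp]: "low 0 (Suc i) = i" "low 0 0 = 0" by (auto simp: low_def)

definition Senv :: "(nat \<Rightarrow> tm) \<Rightarrow> (nat \<Rightarrow> tm) \<Rightarrow> nat \<Rightarrow> trm \<Rightarrow> nat \<Rightarrow> tm" where
  "Senv L M k s i = (if i = k then TLam Nat (etr (\<lambda>i. liftT 0 (L i)) (\<lambda>i. liftT 0 (M i)) s (TVar 0))
      else L (low k i))"

lemma lift_Senv [simp]:
  "liftT j (Senv L M k s i) = Senv (\<lambda>i. liftT j (L i)) (\<lambda>i. liftT j (M i)) k s i"
  by (simp add: Senv_def etr_lift)

lemma Senv_lam:
  "Senv (shft x L) M (Suc k) (liftl 0 s) = shft x (Senv L M k s)"
proof (rule ext)
  fix i show "Senv (shft x L) M (Suc k) (liftl 0 s) i = shft x (Senv L M k s) i"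
    by (cases i) (auto simp: Senv_def etr_liftl)
qed

lemma Senv_mu:
  "Senv L (shft x M) k (liftm 0 s) = Senv L M k s"
  by (rule ext) (auto simp: Senv_def etr_liftm)

lemma etr_substl:
  "convT (etr (Senv L M k s) M t \<kappa>) (etr L M (substl k s t) \<kappa>)"
  "convT (etrc (Senv L M k s) M c) (etrc L M (substlc k s c))"
proof (induct t and c arbitrary: L M k s \<kappa> and L M k s)
  case (LVar i)
  show ?case
  proof (cases "i = k")
    case True
    then have "convT (etr (Senv L M k s) M (LVar i) \<kappa>)
        (substT 0 \<kappa> (etr (\<lambda>i. liftT 0 (L i)) (\<lambda>i. liftT 0 (M i)) s (TVar 0)))"
      by (simp add: Senv_def conv_beta)
    then show ?thesis using True by (simp add: etr_subst)
  next
    case False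
    then show ?thesis by (auto simp: Senv_def low_def)
  qed
next
  case (LLam \<rho> t)
  have "convT (etr (Senv (shft (TVar 1) (\<lambda>i. liftT 0 (liftT 0 (L i)))) (\<lambda>i. liftT 0 (liftT 0 (M i))) (Suc k) (liftl 0 s))
      (\<lambda>i. liftT 0 (liftT 0 (M i))) t (TVar 0))
    (etr (shft (TVar 1) (\<lambda>i. liftT 0 (liftT 0 (L i)))) (\<lambda>i. liftT 0 (liftT 0 (M i))) (substl (Suc k) (liftl 0 s) t) (TVar 0))"
    by (rule LLam)
  then show ?case by (simp add: Senv_lam conv_App conv_Lam)
next
  case (LApp t u)
  let ?L2 = "\<lambda>i. liftT 0 (liftT 0 (L i))" and ?M2 = "\<lambda>i. liftT 0 (liftT 0 (M i))"
  have u: "convT (etr (Senv ?L2 ?M2 k s) ?M2 u (TVar 0)) (etr ?L2 ?M2 (substl k s u) (TVar 0))"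
    by (rule LApp(2))
  have t: "convT (etr (Senv L M k s) M t K) (etr L M (substl k s t) K)" for K by (rule LApp(1))
  show ?case
    apply simp
    apply (rule conv_trans[OF t])
    apply (rule etr_cong_k)
    using u by (simp add: conv_App conv_Lam)
next
  case (LMu \<rho> c)
  have "convT (etrc (Senv L (shft \<kappa> M) k (liftm 0 s)) (shft \<kappa> M) c) (etrc L (shft \<kappa> M) (substlc k (liftm 0 s) c))"
    by (rule LMu)
  then show ?case by (simp add: Senv_mu)
next
  case LZero
  then show ?case by simp
next
  case (LSuc t)
  then show ?case by simp
next
  case (LNrec \<rho> r u t)
  let ?L2 = "\<lambda>i. liftT 0 (liftT 0 (L i))" and ?M2 = "\<lambda>i. liftT 0 (liftT 0 (M i))"
  let ?L4 = "\<lambda>i. liftT 0 (liftT 0 (liftT 0 (liftT 0 (L i))))" and ?M4 = "\<lambda>i. liftT 0 (liftT 0 (liftT 0 (liftT 0 (M i))))"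
  have r: "convT (etr (Senv ?L2 ?M2 k s) ?M2 r (TVar 0)) (etr ?L2 ?M2 (substl k s r) (TVar 0))"
    by (rule LNrec(1))
  have u: "convT (etr (Senv ?L4 ?M4 k s) ?M4 u KSe) (etr ?L4 ?M4 (substl k s u) KSe)"
    by (rule LNrec(2))
  have t: "convT (etr (Senv L M k s) M t K) (etr L M (substl k s t) K)" for K by (rule LNrec(3))
  show ?case
    apply simp
    apply (rule conv_trans[OF t])
    apply (rule etr_cong_k)
    using u r by (simp add: conv_App conv_Lam conv_Nrec)
next
  case (LPass i t)
  then show ?case by simp
qed

primrec KE :: "(nat \<Rightarrow> tm) \<Rightarrow> (nat \<Rightarrow> tm) \<Rightarrow> ctx \<Rightarrow> tm \<Rightarrow> tm" where
  "KE L M Hole k = k"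
| "KE L M (CApp E t) k = KE L M E (TLam Nat (TApp (TApp (TVar 0)
     (TLam Nat (etr (\<lambda>i. liftT 0 (liftT 0 (L i))) (\<lambda>i. liftT 0 (liftT 0 (M i))) t (TVar 0)))) (liftT 0 k)))"
| "KE L M (CSuc E) k = KE L M E (TLam Nat (TApp (liftT 0 k) (TSuc (TVar 0))))"
| "KE L M (CNrec \<rho> r s E) k = KE L M E (TLam Nat (TApp (TNrec Nat
     (TLam Nat (etr (\<lambda>i. liftT 0 (liftT 0 (L i))) (\<lambda>i. liftT 0 (liftT 0 (M i))) r (TVar 0)))
     (TLam Nat (TLam Nat (TLam Nat (etr (\<lambda>i. liftT 0 (liftT 0 (liftT 0 (liftT 0 (L i)))))
           (\<lambda>i. liftT 0 (liftT 0 (liftT 0 (liftT 0 (M i))))) s KSe))))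
     (TVar 0)) (liftT 0 k)))"

lemma etr_plug: "etr L M (plug E u) k = etr L M u (KE L M E k)"
  by (induct E arbitrary: k) auto

lemma KE_lift: "liftT j (KE L M E k) = KE (\<lambda>i. liftT j (L i)) (\<lambda>i. liftT j (M i)) E (liftT j k)"
  by (induct E arbitrary: k) (auto simp: etr_lift)

lemma KE_liftl: "KE L M (ctx_liftl n E) k = KE (\<lambda>i. L (skip n i)) M E k"
  by (induct E arbitrary: k) (auto simp: etr_liftl)

lemma KE_liftm: "KE L M (ctx_liftm n E) k = KE L (\<lambda>i. M (skip n i)) E k"
  by (induct E arbitrary: k) (auto simp: etr_liftm)

lemma etr_mstruct:
  "convT (etr L M (mstruct k j E t) \<kappa>) (etr L (M(k := KE L M E (M j))) t \<kappa>)"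
  "convT (etrc L M (mstructc k j E c)) (etrc L (M(k := KE L M E (M j))) c)"
proof (induct t and c arbitrary: L M k j E \<kappa> and L M k j E)
  case (LVar x)
  then show ?case by simp
next
  case (LLam \<rho> t)
  let ?L2 = "shft (TVar 1) (\<lambda>i. liftT 0 (liftT 0 (L i)))" and ?M2 = "\<lambda>i. liftT 0 (liftT 0 (M i))"
  have ih: "convT (etr ?L2 ?M2 (mstruct k j (ctx_liftl 0 E) t) (TVar 0))
     (etr ?L2 (?M2(k := KE ?L2 ?M2 (ctx_liftl 0 E) (?M2 j))) t (TVar 0))"
    by (rule LLam)
  have eq: "?M2(k := KE ?L2 ?M2 (ctx_liftl 0 E) (?M2 j)) = (\<lambda>i. liftT 0 (liftT 0 ((M(k := KE L M E (M j))) i)))"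
    by (rule ext) (simp add: KE_liftl KE_lift)
  show ?case using ih unfolding eq by (simp add: conv_App conv_Lam)
next
  case (LApp t u)
  let ?L2 = "\<lambda>i. liftT 0 (liftT 0 (L i))" and ?M2 = "\<lambda>i. liftT 0 (liftT 0 (M i))"
  have u: "convT (etr ?L2 ?M2 (mstruct k j E' u) (TVar 0)) (etr ?L2 (?M2(k := KE ?L2 ?M2 E' (?M2 j))) u (TVar 0))" for E'
    by (rule LApp(2))
  have eq: "?M2(k := KE ?L2 ?M2 E (?M2 j)) = (\<lambda>i. liftT 0 (liftT 0 ((M(k := KE L M E (M j))) i)))"
    by (rule ext) (simp add: KE_lift)
  have t: "convT (etr L M (mstruct k j E t) K) (etr L (M(k := KE L M E (M j))) t K)" for K by (rule LApp(1))
  show ?case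
    apply (simp del: fun_upd_apply)
    apply (rule conv_trans[OF t])
    apply (rule etr_cong_k)
    using u[of E] unfolding eq by (simp add: conv_App conv_Lam del: fun_upd_apply)
next
  case (LMu \<rho> c)
  have ih: "convT (etrc L (shft \<kappa> M) (mstructc (Suc k) (Suc j) (ctx_liftm 0 E) c))
     (etrc L ((shft \<kappa> M)(Suc k := KE L (shft \<kappa> M) (ctx_liftm 0 E) (shft \<kappa> M (Suc j)))) c)"
    by (rule LMu)
  have eq: "(shft \<kappa> M)(Suc k := KE L (shft \<kappa> M) (ctx_liftm 0 E) (shft \<kappa> M (Suc j))) = shft \<kappa> (M(k := KE L M E (M j)))"
  proof (rule ext)
    fix i show "((shft \<kappa> M)(Suc k := KE L (shft \<kappa> M) (ctx_liftm 0 E) (shft \<kappa> M (Suc j)))) i = shft \<kappa> (M(k := KE L M E (M j))) i"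
      by (cases i) (auto simp: KE_liftm)
  qed
  show ?case using ih unfolding eq by (simp del: fun_upd_apply)
next
  case LZero
  then show ?case by simp
next
  case (LSuc t)
  then show ?case by simp
next
  case (LNrec \<rho> r u t)
  let ?L2 = "\<lambda>i. liftT 0 (liftT 0 (L i))" and ?M2 = "\<lambda>i. liftT 0 (liftT 0 (M i))"
  let ?L4 = "\<lambda>i. liftT 0 (liftT 0 (liftT 0 (liftT 0 (L i))))" and ?M4 = "\<lambda>i. liftT 0 (liftT 0 (liftT 0 (liftT 0 (M i))))"
  have r: "convT (etr ?L2 ?M2 (mstruct k j E r) (TVar 0)) (etr ?L2 (?M2(k := KE ?L2 ?M2 E (?M2 j))) r (TVar 0))"
    by (rule LNrec(1))
  have u: "convT (etr ?L4 ?M4 (mstruct k j E u) KSe) (etr ?L4 (?M4(k := KE ?L4 ?M4 E (?M4 j))) u KSe)"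
    by (rule LNrec(2))
  have eq2: "?M2(k := KE ?L2 ?M2 E (?M2 j)) = (\<lambda>i. liftT 0 (liftT 0 ((M(k := KE L M E (M j))) i)))"
    by (rule ext) (simp add: KE_lift)
  have eq4: "?M4(k := KE ?L4 ?M4 E (?M4 j)) = (\<lambda>i. liftT 0 (liftT 0 (liftT 0 (liftT 0 ((M(k := KE L M E (M j))) i)))))"
    by (rule ext) (simp add: KE_lift)
  have t: "convT (etr L M (mstruct k j E t) K) (etr L (M(k := KE L M E (M j))) t K)" for K by (rule LNrec(3))
  show ?case
    apply (simp del: fun_upd_apply)
    apply (rule conv_trans[OF t])
    apply (rule etr_cong_k)
    using u r unfolding eq2 eq4 by (simp add: conv_App conv_Lam conv_Nrec del: fun_upd_apply)
next
  case (LPass i t)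
  have t: "convT (etr L M (mstruct k j E t) K) (etr L (M(k := KE L M E (M j))) t K)" for K by (rule LPass)
  show ?case
  proof (cases "i = k")
    case True
    have "(M(k := KE L M E (M j))) k = KE L M E (M j)" by simp
    then show ?thesis using True t[of "KE L M E (M j)"] by (simp add: etr_plug del: fun_upd_apply)
  next
    case False
    have "(M(k := KE L M E (M j))) i = M i" using False by simp
    then show ?thesis using False t[of "M i"] by (simp add: etr_plug del: fun_upd_apply)
  qed
qed



lemma conv_beta_iff: "convT (TApp (TLam \<rho> t) r) X \<longleftrightarrow> convT (substT 0 r t) X"
  by (meson conv_beta conv_sym conv_trans)
lemma conv_beta_iff1: "convT (TApp (TApp (TLam \<rho> t) r) u) X \<longleftrightarrow> convT (TApp (substT 0 r t) u) X"
  by (meson conv_beta conv_App conv_refl conv_sym conv_trans)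
lemma conv_beta_iff2: "convT (TApp (TApp (TApp (TLam \<rho> t) r) u) v) X \<longleftrightarrow> convT (TApp (TApp (substT 0 r t) u) v) X"
  by (meson conv_beta conv_App conv_refl conv_sym conv_trans)
lemma conv_nz_iff: "convT (TApp (TNrec \<rho> r s TZero) u) X \<longleftrightarrow> convT (TApp r u) X"
  by (meson stepT.nrec_zero step_conv conv_App conv_refl conv_sym conv_trans)
lemma conv_ns_iff: "convT (TApp (TNrec \<rho> r s (TSuc t)) u) X \<longleftrightarrow> convT (TApp (TApp (TApp s t) (TNrec \<rho> r s t)) u) X"
  by (meson stepT.nrec_suc step_conv conv_App conv_refl conv_sym conv_trans)

lemmas conv_red = conv_beta_iff conv_beta_iff1 conv_beta_iff2 conv_nz_iff conv_ns_iff

lemma etr_num: "convT (etr L M (numl n) \<kappa>) (TApp \<kappa> (numT n))"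
proof (induct n arbitrary: \<kappa>)
  case 0 then show ?case by simp
next
  case (Suc n)
  have "convT (etr L M (numl (Suc n)) \<kappa>) (TApp (TLam Nat (TApp (liftT 0 \<kappa>) (TSuc (TVar 0)))) (numT n))"
    using Suc by simp
  also have "convT \<dots> (TApp \<kappa> (numT (Suc n)))" by (simp add: conv_red)
  finally show ?case .
qed

definition NRh :: "(nat \<Rightarrow> tm) \<Rightarrow> (nat \<Rightarrow> tm) \<Rightarrow> trm \<Rightarrow> trm \<Rightarrow> tm \<Rightarrow> tm" where
  "NRh L M r s x = TNrec Nat (TLam Nat (etr (\<lambda>i. liftT 0 (L i)) (\<lambda>i. liftT 0 (M i)) r (TVar 0)))
     (TLam Nat (TLam Nat (TLam Nat (etr (\<lambda>i. liftT 0 (liftT 0 (liftT 0 (L i))))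
           (\<lambda>i. liftT 0 (liftT 0 (liftT 0 (M i)))) s KSe)))) x"

lemma etr_nrec_NRh: "etr L M (LNrec \<rho> r s t) \<kappa> =
   etr L M t (TLam Nat (TApp (NRh (\<lambda>i. liftT 0 (L i)) (\<lambda>i. liftT 0 (M i)) r s (TVar 0)) (liftT 0 \<kappa>)))"
  by (simp add: NRh_def)

lemma NRh_lift: "liftT j (NRh L M r s x) = NRh (\<lambda>i. liftT j (L i)) (\<lambda>i. liftT j (M i)) r s (liftT j x)"
  by (simp add: NRh_def etr_lift)
lemma NRh_subst: "substT j u (NRh L M r s x) = NRh (\<lambda>i. substT j u (L i)) (\<lambda>i. substT j u (M i)) r s (substT j u x)"
  by (simp add: NRh_def etr_subst)

lemma etr_nrec_num: "convT (etr L M (LNrec \<rho> r s (numl n)) \<kappa>) (TApp (NRh L M r s (numT n)) \<kappa>)"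
proof -
  have "convT (etr L M (LNrec \<rho> r s (numl n)) \<kappa>)
     (TApp (TLam Nat (TApp (NRh (\<lambda>i. liftT 0 (L i)) (\<lambda>i. liftT 0 (M i)) r s (TVar 0)) (liftT 0 \<kappa>))) (numT n))"
    unfolding etr_nrec_NRh by (rule etr_num)
  also have "convT \<dots> (TApp (NRh L M r s (numT n)) \<kappa>)"
    by (simp add: conv_red NRh_subst)
  finally show ?thesis .
qed

lemma NRh_lam: "\<exists>Y. convT (NRh L M r s (numT n)) (TLam Nat Y)"
proof (cases n)
  case 0
  then show ?thesis by (auto simp: NRh_def intro: step_conv stepT.nrec_zero)
next
  case (Suc m)
  let ?A = "NRh L M r s (numT m)"
  have "convT (NRh L M r s (numT n)) (TApp (TApp (TLam Nat (TLam Nat (TLam Nat (etr (\<lambda>i. liftT 0 (liftT 0 (liftT 0 (L i))))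
           (\<lambda>i. liftT 0 (liftT 0 (liftT 0 (M i)))) s KSe)))) (numT m)) ?A)"
    using Suc by (auto simp: NRh_def intro: step_conv stepT.nrec_suc)
  also have "convT \<dots> (TApp (TLam Nat (TLam Nat (substT (Suc (Suc 0)) (numT m) (etr (\<lambda>i. liftT 0 (liftT 0 (liftT 0 (L i))))
           (\<lambda>i. liftT 0 (liftT 0 (liftT 0 (M i)))) s KSe)))) ?A)"
    using conv_App[OF conv_beta conv_refl, of Nat "TLam Nat (TLam Nat (etr (\<lambda>i. liftT 0 (liftT 0 (liftT 0 (L i))))
           (\<lambda>i. liftT 0 (liftT 0 (liftT 0 (M i)))) s KSe))" "numT m" ?A] by simp
  also have "convT \<dots> (substT 0 ?A (TLam Nat (substT (Suc (Suc 0)) (numT m) (etr (\<lambda>i. liftT 0 (liftT 0 (liftT 0 (L i))))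
           (\<lambda>i. liftT 0 (liftT 0 (liftT 0 (M i)))) s KSe))))"
    by (rule conv_beta)
  finally show ?thesis by (simp only: substT.simps) blast
qed

lemma eta_conv: "convT X (TLam Nat Y) \<Longrightarrow> convT (TLam Nat (TApp (liftT 0 X) (TVar 0))) X"
proof -
  assume h: "convT X (TLam Nat Y)"
  have "convT (TLam Nat (TApp (liftT 0 X) (TVar 0))) (TLam Nat (TApp (liftT 0 (TLam Nat Y)) (TVar 0)))"
    using conv_Lam[OF conv_App[OF conv_lift[OF h] conv_refl], of Nat 0 "TVar 0"] by simp
  also have "convT \<dots> (TLam Nat Y)"
    using conv_Lam[OF conv_beta[of Nat "liftT 1 Y" "TVar 0"]] by simp
  also have "convT \<dots> X" using h by (rule conv_sym)
  finally show ?thesis .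
qed



definition STp :: "(nat \<Rightarrow> tm) \<Rightarrow> (nat \<Rightarrow> tm) \<Rightarrow> trm \<Rightarrow> tm" where
  "STp L M s = TLam Nat (TLam Nat (TLam Nat (etr (\<lambda>i. liftT 0 (liftT 0 (liftT 0 (L i))))
           (\<lambda>i. liftT 0 (liftT 0 (liftT 0 (M i)))) s KSe)))"

lemma NRh_suc: "convT (TApp (NRh L M r s (TSuc x)) \<kappa>) (TApp (TApp (TApp (STp L M s) x) (NRh L M r s x)) \<kappa>)"
  unfolding NRh_def STp_def by (rule conv_App[OF step_conv[OF stepT.nrec_suc] conv_refl])

definition KSv :: "tm \<Rightarrow> tm \<Rightarrow> tm \<Rightarrow> tm" where
  "KSv x A \<kappa> = TLam Nat (TApp (TApp (TVar 0) (TLam Nat (TApp (TVar 0) (liftT 0 (liftT 0 x)))))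
            (TLam Nat (TApp (TApp (TVar 0) (liftT 0 (liftT 0 A))) (liftT 0 (liftT 0 \<kappa>)))))"

lemma STp_app: "convT (TApp (TApp (TApp (STp L M s) x) A) \<kappa>) (etr L M s (KSv x A \<kappa>))"
  by (simp add: STp_def KSv_def conv_red etr_subst KSe_def)

lemma sim_nrec_suc: "convT (etr L M (LNrec \<rho> r s (LSuc (numl n))) \<kappa>)
    (etr L M (LApp (LApp s (numl n)) (LNrec \<rho> r s (numl n))) \<kappa>)"
proof -
  let ?m = "numT n" and ?A = "NRh L M r s (numT n)"
  have "convT (etr L M (LNrec \<rho> r s (LSuc (numl n))) \<kappa>) (TApp (NRh L M r s (TSuc ?m)) \<kappa>)"
    using etr_nrec_num[of L M \<rho> r s "Suc n" \<kappa>] by simp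
  also have "convT \<dots> (TApp (TApp (TApp (STp L M s) ?m) ?A) \<kappa>)" by (rule NRh_suc)
  also have "convT \<dots> (etr L M s (KSv ?m ?A \<kappa>))" by (rule STp_app)
  also have "convT \<dots> (etr L M (LApp (LApp s (numl n)) (LNrec \<rho> r s (numl n))) \<kappa>)"
  proof -
    let ?L2 = "\<lambda>i. liftT 0 (liftT 0 (L i))" and ?M2 = "\<lambda>i. liftT 0 (liftT 0 (M i))"
    let ?L3 = "\<lambda>i. liftT 0 (liftT 0 (liftT 0 (L i)))" and ?M3 = "\<lambda>i. liftT 0 (liftT 0 (liftT 0 (M i)))"
    have n1: "convT (TLam Nat (TApp (TVar 0) ?m)) (TLam Nat (etr ?L2 ?M2 (numl n) (TVar 0)))"
      by (rule conv_Lam, rule conv_sym, rule etr_num)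
    obtain Y where Y: "convT (NRh ?L2 ?M2 r s ?m) (TLam Nat Y)" using NRh_lam by blast
    have "convT (TLam Nat (etr ?L3 ?M3 (LNrec \<rho> r s (numl n)) (TVar 0))) (TLam Nat (TApp (NRh ?L3 ?M3 r s ?m) (TVar 0)))"
      by (rule conv_Lam, rule etr_nrec_num)
    also have "convT \<dots> (NRh ?L2 ?M2 r s ?m)"
      using eta_conv[OF Y] by (simp add: NRh_lift)
    finally have n2: "convT (NRh ?L2 ?M2 r s ?m) (TLam Nat (etr ?L3 ?M3 (LNrec \<rho> r s (numl n)) (TVar 0)))"
      by (rule conv_sym)
    show ?thesis
      apply (simp add: KSv_def)
      apply (rule etr_cong_k)
      using n1 n2 by (simp add: conv_App conv_Lam NRh_lift etr_lift)
  qed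
  finally show ?thesis .
qed

lemma beta_shape: "convT (TApp (TLam Nat (TApp (TApp (TVar 0) (liftT 0 R)) (liftT 0 \<kappa>))) (TLam \<rho> (TLam \<sigma> X)))
   (substT 0 \<kappa> (substT 1 (liftT 0 R) X))"
  by (simp add: conv_red)

lemma beta_etr: "substT 0 \<kappa> (substT 1 (liftT 0 R) (etr (shft (TVar 1) (\<lambda>i. liftT 0 (liftT 0 (L i)))) (\<lambda>i. liftT 0 (liftT 0 (M i))) t (TVar 0)))
   = etr (shft R L) M t \<kappa>"
  by (simp add: etr_subst)

lemma sim_beta: "convT (etr L M (LApp (LLam \<rho> t) r) \<kappa>) (etr L M (substl 0 r t) \<kappa>)"
proof -
  let ?R = "TLam Nat (etr (\<lambda>i. liftT 0 (L i)) (\<lambda>i. liftT 0 (M i)) r (TVar 0))"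
  have e: "TLam Nat (etr (\<lambda>i. liftT 0 (liftT 0 (L i))) (\<lambda>i. liftT 0 (liftT 0 (M i))) r (TVar 0)) = liftT 0 ?R"
    by (simp add: etr_lift)
  have "convT (etr L M (LApp (LLam \<rho> t) r) \<kappa>)
     (etr (shft ?R L) M t \<kappa>)"
    unfolding etr.simps e using beta_shape[of ?R \<kappa> Nat Nat "etr (shft (TVar 1) (\<lambda>i. liftT 0 (liftT 0 (L i)))) (\<lambda>i. liftT 0 (liftT 0 (M i))) t (TVar 0)"]
    by (simp only: beta_etr)
  also have "shft (TLam Nat (etr (\<lambda>i. liftT 0 (L i)) (\<lambda>i. liftT 0 (M i)) r (TVar 0))) L = Senv L M 0 r"
  proof (rule ext)
    fix i show "shft (TLam Nat (etr (\<lambda>i. liftT 0 (L i)) (\<lambda>i. liftT 0 (M i)) r (TVar 0))) L i = Senv L M 0 r i"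
      by (cases i) (auto simp: Senv_def)
  qed
  also have "convT (etr (Senv L M 0 r) M t \<kappa>) (etr L M (substl 0 r t) \<kappa>)" by (rule etr_substl)
  finally show ?thesis .
qed



lemma sim:
  "stepl a b \<Longrightarrow> convT (etr L M a \<kappa>) (etr L M b \<kappa>)"
  "steplc c d \<Longrightarrow> convT (etrc L M c) (etrc L M d)"
proof (induct arbitrary: L M \<kappa> and L M rule: stepl_steplc.inducts)
  case (beta \<rho> t r)
  then show ?case by (rule sim_beta)
next
  case (suc_mu \<rho> c)
  have "convT (etrc L (shft \<kappa> M) (mstructc 0 0 (CSuc Hole) c))
     (etrc L ((shft \<kappa> M)(0 := KE L (shft \<kappa> M) (CSuc Hole) (shft \<kappa> M 0))) c)" by (rule etr_mstruct)
  moreover have "(shft \<kappa> M)(0 := KE L (shft \<kappa> M) (CSuc Hole) (shft \<kappa> M 0)) = shft (TLam Nat (TApp (liftT 0 \<kappa>) (TSuc (TVar 0)))) M"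
  proof (rule ext)
    fix i show "((shft \<kappa> M)(0 := KE L (shft \<kappa> M) (CSuc Hole) (shft \<kappa> M 0))) i = shft (TLam Nat (TApp (liftT 0 \<kappa>) (TSuc (TVar 0)))) M i"
      by (cases i) auto
  qed
  ultimately show ?case by (simp add: conv_sym del: fun_upd_apply)
next
  case (app_mu \<rho> c s)
  have "convT (etrc L (shft \<kappa> M) (mstructc 0 0 (CApp Hole (liftm 0 s)) c))
     (etrc L ((shft \<kappa> M)(0 := KE L (shft \<kappa> M) (CApp Hole (liftm 0 s)) (shft \<kappa> M 0))) c)" by (rule etr_mstruct)
  moreover have "(shft \<kappa> M)(0 := KE L (shft \<kappa> M) (CApp Hole (liftm 0 s)) (shft \<kappa> M 0)) =
     shft (TLam Nat (TApp (TApp (TVar 0) (TLam Nat (etr (\<lambda>i. liftT 0 (liftT 0 (L i))) (\<lambda>i. liftT 0 (liftT 0 (M i))) s (TVar 0)))) (liftT 0 \<kappa>))) M"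
  proof (rule ext)
    fix i show "((shft \<kappa> M)(0 := KE L (shft \<kappa> M) (CApp Hole (liftm 0 s)) (shft \<kappa> M 0))) i =
     shft (TLam Nat (TApp (TApp (TVar 0) (TLam Nat (etr (\<lambda>i. liftT 0 (liftT 0 (L i))) (\<lambda>i. liftT 0 (liftT 0 (M i))) s (TVar 0)))) (liftT 0 \<kappa>))) M i"
      by (cases i) (auto simp: etr_liftm)
  qed
  ultimately show ?case by (simp add: conv_sym del: fun_upd_apply)
next
  case (mu_eta t \<rho>)
  have "etr L (shft \<kappa> M) t \<kappa> = etr L (\<lambda>i. M (low 0 i)) t \<kappa>"
    by (rule etr_mfree(1)[OF mu_eta]) (auto simp: shft_def split: nat.split)
  then show ?case by (simp add: etr_lowerm)
next
  case (pass_mu a \<rho> c)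
  have "convT (etrc L (\<lambda>i. M (low 0 i)) (mstructc 0 (Suc a) Hole c))
     (etrc L ((\<lambda>i. M (low 0 i))(0 := KE L (\<lambda>i. M (low 0 i)) Hole (M (low 0 (Suc a))))) c)" by (rule etr_mstruct)
  moreover have "(\<lambda>i. M (low 0 i))(0 := KE L (\<lambda>i. M (low 0 i)) Hole (M (low 0 (Suc a)))) = shft (M a) M"
  proof (rule ext)
    fix i show "((\<lambda>i. M (low 0 i))(0 := KE L (\<lambda>i. M (low 0 i)) Hole (M (low 0 (Suc a))))) i = shft (M a) M i"
      by (cases i) auto
  qed
  ultimately show ?case by (simp add: conv_sym etr_lowerm del: fun_upd_apply)
next
  case (nrec_zero \<rho> r s)
  have "convT (etr L M (LNrec \<rho> r s (numl 0)) \<kappa>) (TApp (NRh L M r s (numT 0)) \<kappa>)" by (rule etr_nrec_num)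
  also have "convT \<dots> (etr L M r \<kappa>)" by (simp add: NRh_def conv_red etr_subst)
  finally show ?case by simp
next
  case (nrec_suc \<rho> r s n)
  then show ?case by (rule sim_nrec_suc)
next
  case (nrec_mu \<rho> r s \<sigma> c)
  have "convT (etrc L (shft \<kappa> M) (mstructc 0 0 (CNrec \<rho> (liftm 0 r) (liftm 0 s) Hole) c))
     (etrc L ((shft \<kappa> M)(0 := KE L (shft \<kappa> M) (CNrec \<rho> (liftm 0 r) (liftm 0 s) Hole) (shft \<kappa> M 0))) c)" by (rule etr_mstruct)
  moreover have "(shft \<kappa> M)(0 := KE L (shft \<kappa> M) (CNrec \<rho> (liftm 0 r) (liftm 0 s) Hole) (shft \<kappa> M 0)) =
     shft (TLam Nat (TApp (TNrec Nat
     (TLam Nat (etr (\<lambda>i. liftT 0 (liftT 0 (L i))) (\<lambda>i. liftT 0 (liftT 0 (M i))) r (TVar 0)))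
     (TLam Nat (TLam Nat (TLam Nat (etr (\<lambda>i. liftT 0 (liftT 0 (liftT 0 (liftT 0 (L i)))))
           (\<lambda>i. liftT 0 (liftT 0 (liftT 0 (liftT 0 (M i))))) s KSe))))
     (TVar 0)) (liftT 0 \<kappa>))) M"
  proof (rule ext)
    fix i show "((shft \<kappa> M)(0 := KE L (shft \<kappa> M) (CNrec \<rho> (liftm 0 r) (liftm 0 s) Hole) (shft \<kappa> M 0))) i =
     shft (TLam Nat (TApp (TNrec Nat
     (TLam Nat (etr (\<lambda>i. liftT 0 (liftT 0 (L i))) (\<lambda>i. liftT 0 (liftT 0 (M i))) r (TVar 0)))
     (TLam Nat (TLam Nat (TLam Nat (etr (\<lambda>i. liftT 0 (liftT 0 (liftT 0 (liftT 0 (L i)))))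
           (\<lambda>i. liftT 0 (liftT 0 (liftT 0 (liftT 0 (M i))))) s KSe))))
     (TVar 0)) (liftT 0 \<kappa>))) M i"
      by (cases i) (auto simp: etr_liftm)
  qed
  ultimately show ?case by (simp add: conv_sym del: fun_upd_apply)
next
  case (c_lam t t' \<rho>)
  then show ?case by (simp add: conv_App conv_Lam)
next
  case (c_appl t t' s)
  then show ?case by simp
next
  case (c_appr s s' t)
  then show ?case by (simp add: etr_cong_k conv_App conv_Lam)
next
  case (c_mu c c' \<rho>)
  then show ?case by simp
next
  case (c_suc t t')
  then show ?case by simp
next
  case (c_nrec1 r r' \<rho> s t)
  then show ?case by (simp add: etr_cong_k conv_App conv_Lam conv_Nrec)
next
  case (c_nrec2 s s' \<rho> r t)
  then show ?case by (simp add: etr_cong_k conv_App conv_Lam conv_Nrec)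
next
  case (c_nrec3 t t' \<rho> r s)
  then show ?case by simp
next
  case (c_pass t t' i)
  then show ?case by simp
qed

lemma sim_conv: "convl a b \<Longrightarrow> convT (etr L M a \<kappa>) (etr L M b \<kappa>)"
  unfolding convl_def
proof (induct rule: equivclp_induct)
  case base then show ?case by simp
next
  case (step y z)
  then show ?case using sim(1) conv_sym conv_trans by blast
qed



primrec V :: "ty \<Rightarrow> ty" where
  "V Nat = Nat"
| "V (Arr \<sigma> \<tau>) = Arr (Arr (Arr (V \<sigma>) Nat) Nat) (Arr (Arr (V \<tau>) Nat) Nat)"

definition Kt :: "ty \<Rightarrow> ty" where "Kt \<rho> = Arr (V \<rho>) Nat"
definition Ct :: "ty \<Rightarrow> ty" where "Ct \<rho> = Arr (Kt \<rho>) Nat"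

fun typeof :: "ty list \<Rightarrow> trm \<Rightarrow> ty" where
  "typeof \<Gamma> (LVar i) = \<Gamma> ! i"
| "typeof \<Gamma> (LLam \<sigma> t) = Arr \<sigma> (typeof (\<sigma> # \<Gamma>) t)"
| "typeof \<Gamma> (LApp t s) = cod (typeof \<Gamma> t)"
| "typeof \<Gamma> (LMu \<rho> c) = \<rho>"
| "typeof \<Gamma> LZero = Nat"
| "typeof \<Gamma> (LSuc t) = Nat"
| "typeof \<Gamma> (LNrec \<rho> r s t) = \<rho>"

lemma typeof_correct:
  "typl \<Gamma> \<Delta> t \<rho> \<Longrightarrow> typeof \<Gamma> t = \<rho>"
  "typlc \<Gamma> \<Delta> c \<Longrightarrow> True"
  by (induct rule: typl_typlc.inducts) auto

definition KSa :: "ty \<Rightarrow> tm" where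
  "KSa \<rho> = TLam (V (Arr Nat (Arr \<rho> \<rho>))) (TApp (TApp (TVar 0) (TLam (Kt Nat) (TApp (TVar 0) (TVar 4))))
                       (TLam (V (Arr \<rho> \<rho>)) (TApp (TApp (TVar 0) (TVar 3)) (TVar 2))))"

primrec tr :: "ty list \<Rightarrow> (nat \<Rightarrow> tm) \<Rightarrow> (nat \<Rightarrow> tm) \<Rightarrow> trm \<Rightarrow> tm \<Rightarrow> tm"
  and trc :: "ty list \<Rightarrow> (nat \<Rightarrow> tm) \<Rightarrow> (nat \<Rightarrow> tm) \<Rightarrow> cmd \<Rightarrow> tm" where
  "tr \<Gamma> L M (LVar i) k = TApp (L i) k"
| "tr \<Gamma> L M (LLam \<sigma> t) k = TApp k (TLam (Ct \<sigma>) (TLam (Kt (typeof (\<sigma> # \<Gamma>) t))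
     (tr (\<sigma> # \<Gamma>) (shft (TVar 1) (\<lambda>i. liftT 0 (liftT 0 (L i)))) (\<lambda>i. liftT 0 (liftT 0 (M i))) t (TVar 0))))"
| "tr \<Gamma> L M (LApp t s) k = tr \<Gamma> L M t (TLam (V (typeof \<Gamma> t)) (TApp (TApp (TVar 0)
     (TLam (Kt (typeof \<Gamma> s)) (tr \<Gamma> (\<lambda>i. liftT 0 (liftT 0 (L i))) (\<lambda>i. liftT 0 (liftT 0 (M i))) s (TVar 0)))) (liftT 0 k)))"
| "tr \<Gamma> L M (LMu \<rho> c) k = trc \<Gamma> L (shft k M) c"
| "tr \<Gamma> L M LZero k = TApp k TZero"
| "tr \<Gamma> L M (LSuc t) k = tr \<Gamma> L M t (TLam Nat (TApp (liftT 0 k) (TSuc (TVar 0))))"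
| "tr \<Gamma> L M (LNrec \<rho> r s t) k = tr \<Gamma> L M t (TLam Nat (TApp (TNrec (Ct \<rho>)
     (TLam (Kt \<rho>) (tr \<Gamma> (\<lambda>i. liftT 0 (liftT 0 (L i))) (\<lambda>i. liftT 0 (liftT 0 (M i))) r (TVar 0)))
     (TLam Nat (TLam (Ct \<rho>) (TLam (Kt \<rho>) (tr \<Gamma> (\<lambda>i. liftT 0 (liftT 0 (liftT 0 (liftT 0 (L i)))))
           (\<lambda>i. liftT 0 (liftT 0 (liftT 0 (liftT 0 (M i))))) s (KSa \<rho>)))))
     (TVar 0)) (liftT 0 k)))"
| "trc \<Gamma> L M (LPass i t) = tr \<Gamma> L M t (M i)"

lemma shft_erase [simp]: "(\<lambda>i. eraseT (shft x g i)) = shft (eraseT x) (\<lambda>i. eraseT (g i))"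
  by (rule ext, simp add: shft_def split: nat.split)

lemma erase_KSa [simp]: "eraseT (KSa \<rho>) = KSe"
  by (simp add: KSa_def KSe_def)

lemma erase_tr:
  "eraseT (tr \<Gamma> L M t k) = etr (\<lambda>i. eraseT (L i)) (\<lambda>i. eraseT (M i)) t (eraseT k)"
  "eraseT (trc \<Gamma> L M c) = etrc (\<lambda>i. eraseT (L i)) (\<lambda>i. eraseT (M i)) c"
  by (induct t and c arbitrary: \<Gamma> L M k and \<Gamma> L M) simp_all

lemma typT_lift: "typT E t \<rho> \<Longrightarrow> k \<le> length E \<Longrightarrow> typT (take k E @ \<sigma> # drop k E) (liftT k t) \<rho>"
proof (induct E t \<rho> arbitrary: k rule: typT.induct)
  case (var i E \<rho>)
  then show ?case by (auto intro!: typT.var simp: nth_append min_def)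
next
  case (lam \<sigma>' E t \<tau>)
  then have "typT (take (Suc k) (\<sigma>' # E) @ \<sigma> # drop (Suc k) (\<sigma>' # E)) (liftT (Suc k) t) \<tau>"
    by (metis Suc_le_mono length_Cons)
  then show ?case by (auto intro: typT.lam)
qed (auto intro: typT.intros)

lemma typT_lift0: "typT E t \<rho> \<Longrightarrow> typT (\<sigma> # E) (liftT 0 t) \<rho>"
  using typT_lift[of E t \<rho> 0 \<sigma>] by simp

lemma typ_KSa: "typT (Kt \<rho> # Ct \<rho> # Nat # Nat # E) (KSa \<rho>) (Kt (Arr Nat (Arr \<rho> \<rho>)))"
  unfolding KSa_def Kt_def Ct_def
  by simp (rule typT.intros | simp)+

lemma typ_tr:
  "typl \<Gamma> \<Delta> t \<rho> \<Longrightarrow> (\<forall>i<length \<Gamma>. typT E (L i) (Ct (\<Gamma>!i))) \<Longrightarrow> (\<forall>i<length \<Delta>. typT E (M i) (Kt (\<Delta>!i)))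
     \<Longrightarrow> typT E k (Kt \<rho>) \<Longrightarrow> typT E (tr \<Gamma> L M t k) Nat"
  "typlc \<Gamma> \<Delta> c \<Longrightarrow> (\<forall>i<length \<Gamma>. typT E (L i) (Ct (\<Gamma>!i))) \<Longrightarrow> (\<forall>i<length \<Delta>. typT E (M i) (Kt (\<Delta>!i)))
     \<Longrightarrow> typT E (trc \<Gamma> L M c) Nat"
proof (induct arbitrary: E L M k and E L M rule: typl_typlc.inducts)
  case (var i \<Gamma> \<rho> \<Delta>)
  then show ?case by (auto intro!: typT.app simp: Ct_def)
next
  case (lam \<sigma> \<Gamma> \<Delta> t \<tau>)
  let ?E = "Kt \<tau> # Ct \<sigma> # E"
  have ty: "typeof (\<sigma> # \<Gamma>) t = \<tau>" using lam.hyps(1) by (rule typeof_correct)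
  have L: "\<forall>i<length (\<sigma> # \<Gamma>). typT ?E (shft (TVar 1) (\<lambda>i. liftT 0 (liftT 0 (L i))) i) (Ct ((\<sigma> # \<Gamma>)!i))"
  proof (intro allI impI)
    fix i assume "i < length (\<sigma> # \<Gamma>)"
    then show "typT ?E (shft (TVar 1) (\<lambda>i. liftT 0 (liftT 0 (L i))) i) (Ct ((\<sigma> # \<Gamma>)!i))"
      using lam.prems(1) by (cases i) (auto intro!: typT.var typT_lift0)
  qed
  have M: "\<forall>i<length \<Delta>. typT ?E (liftT 0 (liftT 0 (M i))) (Kt (\<Delta>!i))"
    using lam.prems(2) by (auto intro!: typT_lift0)
  have "typT ?E (tr (\<sigma> # \<Gamma>) (shft (TVar 1) (\<lambda>i. liftT 0 (liftT 0 (L i)))) (\<lambda>i. liftT 0 (liftT 0 (M i))) t (TVar 0)) Nat"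
    using lam.hyps(2)[OF L M, of "TVar 0"] typT.var[of 0 ?E "Kt \<tau>"] by simp
  then show ?case using lam.prems(3) ty
    by (auto intro!: typT.app typT.lam simp: Kt_def Ct_def)
next
  case (app \<Gamma> \<Delta> t \<sigma> \<tau> s)
  have ty: "typeof \<Gamma> t = Arr \<sigma> \<tau>" "typeof \<Gamma> s = \<sigma>" using app.hyps(1,3) by (auto intro: typeof_correct)
  let ?E = "Kt \<sigma> # V (Arr \<sigma> \<tau>) # E"
  have L: "\<forall>i<length \<Gamma>. typT ?E (liftT 0 (liftT 0 (L i))) (Ct (\<Gamma>!i))" using app.prems(1) by (auto intro!: typT_lift0)
  have M: "\<forall>i<length \<Delta>. typT ?E (liftT 0 (liftT 0 (M i))) (Kt (\<Delta>!i))" using app.prems(2) by (auto intro!: typT_lift0)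
  have s: "typT ?E (tr \<Gamma> (\<lambda>i. liftT 0 (liftT 0 (L i))) (\<lambda>i. liftT 0 (liftT 0 (M i))) s (TVar 0)) Nat"
    using app.hyps(4)[OF L M, of "TVar 0"] typT.var[of 0 ?E "Kt \<sigma>"] by simp
  have k: "typT (V (Arr \<sigma> \<tau>) # E) (liftT 0 k) (Kt \<tau>)" using app.prems(3) by (rule typT_lift0)
  have "typT E (TLam (V (Arr \<sigma> \<tau>)) (TApp (TApp (TVar 0)
     (TLam (Kt \<sigma>) (tr \<Gamma> (\<lambda>i. liftT 0 (liftT 0 (L i))) (\<lambda>i. liftT 0 (liftT 0 (M i))) s (TVar 0)))) (liftT 0 k))) (Kt (Arr \<sigma> \<tau>))"
    unfolding Kt_def Ct_def V.simps(2)
    apply (rule typT.lam, rule typT.app, rule typT.app, rule typT.var)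
    using s k by (auto intro: typT.lam simp: Kt_def Ct_def)
  then show ?case using app.hyps(2)[OF app.prems(1,2)] ty by simp
next
  case (zero \<Gamma> \<Delta>)
  then show ?case by (auto intro!: typT.app typT.zero simp: Kt_def)
next
  case (suc \<Gamma> \<Delta> t)
  have "typT E (TLam Nat (TApp (liftT 0 k) (TSuc (TVar 0)))) (Kt Nat)"
    using typT_lift0[OF suc.prems(3), of Nat] by (auto intro!: typT.lam typT.app typT.suc typT.var simp: Kt_def)
  then show ?case using suc.hyps(2)[OF suc.prems(1,2)] by simp
next
  case (nrec \<Gamma> \<Delta> r \<rho> s t)
  let ?E2 = "Kt \<rho> # Nat # E" and ?E4 = "Kt \<rho> # Ct \<rho> # Nat # Nat # E"
  have L2: "\<forall>i<length \<Gamma>. typT ?E2 (liftT 0 (liftT 0 (L i))) (Ct (\<Gamma>!i))" using nrec.prems(1) by (auto intro!: typT_lift0)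
  have M2: "\<forall>i<length \<Delta>. typT ?E2 (liftT 0 (liftT 0 (M i))) (Kt (\<Delta>!i))" using nrec.prems(2) by (auto intro!: typT_lift0)
  have L4: "\<forall>i<length \<Gamma>. typT ?E4 (liftT 0 (liftT 0 (liftT 0 (liftT 0 (L i))))) (Ct (\<Gamma>!i))" using nrec.prems(1) by (auto intro!: typT_lift0)
  have M4: "\<forall>i<length \<Delta>. typT ?E4 (liftT 0 (liftT 0 (liftT 0 (liftT 0 (M i))))) (Kt (\<Delta>!i))" using nrec.prems(2) by (auto intro!: typT_lift0)
  have r: "typT ?E2 (tr \<Gamma> (\<lambda>i. liftT 0 (liftT 0 (L i))) (\<lambda>i. liftT 0 (liftT 0 (M i))) r (TVar 0)) Nat"
    using nrec.hyps(2)[OF L2 M2, of "TVar 0"] typT.var[of 0 ?E2 "Kt \<rho>"] by simp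
  have s: "typT ?E4 (tr \<Gamma> (\<lambda>i. liftT 0 (liftT 0 (liftT 0 (liftT 0 (L i))))) (\<lambda>i. liftT 0 (liftT 0 (liftT 0 (liftT 0 (M i))))) s (KSa \<rho>)) Nat"
    using nrec.hyps(4)[OF L4 M4 typ_KSa] by simp
  have k: "typT (Nat # E) (liftT 0 k) (Kt \<rho>)" using nrec.prems(3) by (rule typT_lift0)
  have "typT E (TLam Nat (TApp (TNrec (Ct \<rho>)
     (TLam (Kt \<rho>) (tr \<Gamma> (\<lambda>i. liftT 0 (liftT 0 (L i))) (\<lambda>i. liftT 0 (liftT 0 (M i))) r (TVar 0)))
     (TLam Nat (TLam (Ct \<rho>) (TLam (Kt \<rho>) (tr \<Gamma> (\<lambda>i. liftT 0 (liftT 0 (liftT 0 (liftT 0 (L i)))))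
           (\<lambda>i. liftT 0 (liftT 0 (liftT 0 (liftT 0 (M i))))) s (KSa \<rho>)))))
     (TVar 0)) (liftT 0 k))) (Kt Nat)"
    unfolding Kt_def Ct_def V.simps(1)
    apply (rule typT.lam, rule typT.app, rule typT.nrec)
    using r s k by (auto intro!: typT.lam typT.var simp: Kt_def Ct_def)
  then show ?case using nrec.hyps(6)[OF nrec.prems(1,2)] by simp
next
  case (activate \<Gamma> \<rho> \<Delta> c)
  have M': "\<forall>i<length (\<rho> # \<Delta>). typT E (shft k M i) (Kt ((\<rho> # \<Delta>)!i))"
  proof (intro allI impI)
    fix i assume "i < length (\<rho> # \<Delta>)"
    then show "typT E (shft k M i) (Kt ((\<rho> # \<Delta>)!i))" using activate by (cases i) auto
  qed
  then show ?case using activate.hyps(2)[OF activate.prems(1) M'] by simp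
next
  case (passivate \<Gamma> \<Delta> t \<rho> i)
  then show ?case by auto
qed



primrec W :: "nat \<Rightarrow> tm" where
  "W 0 = TLam (Arr (Kt Nat) Nat) (TApp (TVar 0) (TLam Nat (TVar 0)))"
| "W (Suc n) = TLam (Arr (Kt (natArr (Suc n))) Nat) (TLam Nat (TApp (W n)
     (TLam (Kt (natArr n)) (TApp (TVar 2) (TLam (V (natArr (Suc n)))
        (TApp (TApp (TVar 0) (TLam (Kt Nat) (TApp (TVar 0) (TVar 3)))) (TVar 1)))))))"

lemma typ_W: "typT E (W n) (Arr (Arr (Kt (natArr n)) Nat) (natArr n))"
proof (induct n arbitrary: E)
  case 0
  show ?case unfolding W.simps Kt_def by simp (rule typT.intros | simp)+
next
  case (Suc n)
  note IH = Suc[unfolded Kt_def]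
  show ?case unfolding W.simps Kt_def Ct_def natArr.simps V.simps
    apply (rule typT.lam, rule typT.lam, rule typT.app[OF IH], rule typT.lam)
    apply (rule typT.app[where \<sigma> = "Arr (Arr (Arr (Arr Nat Nat) Nat) (Arr (Arr (V (natArr n)) Nat) Nat)) Nat"])
     apply (rule typT.var; simp)
    apply (rule typT.lam, rule typT.app[where \<sigma> = "Arr (V (natArr n)) Nat"])
     apply (rule typT.app[where \<sigma> = "Arr (Arr Nat Nat) Nat"])
      apply (rule typT.var; simp)
     apply (rule typT.lam, rule typT.app[where \<sigma> = Nat]; rule typT.var; simp)
    apply (rule typT.var; simp)
    done
qed

lemma eW_lift [simp]: "liftT k (eraseT (W n)) = eraseT (W n)"
  by (induct n arbitrary: k) auto
lemma eW_subst [simp]: "substT k u (eraseT (W n)) = eraseT (W n)"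
  by (induct n arbitrary: k u) auto

lemma subst_num_lift [simp]: "substT (Suc j) (numT m) (liftT 0 x) = liftT 0 (substT j (numT m) x)"
  using subst_lift_comm[of j "numT m" x] by simp

primrec ekont :: "nat list \<Rightarrow> tm" where
  "ekont [] = TLam Nat (TVar 0)"
| "ekont (m # ms) = TLam Nat (TApp (TApp (TVar 0) (TLam Nat (TApp (TVar 0) (numT m)))) (liftT 0 (ekont ms)))"

lemma conv_foldl: "convT a b \<Longrightarrow> convT (foldl TApp a xs) (foldl TApp b xs)"
proof (induct xs arbitrary: a b)
  case Nil then show ?case by simp
next
  case (Cons x xs)
  show ?case using Cons(1)[OF conv_App[OF Cons(2) conv_refl]] by simp
qed

lemma W_apply: "length ms = n \<Longrightarrow> convT (foldl TApp (TApp (eraseT (W n)) P) (map numT ms)) (TApp P (ekont ms))"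
proof (induct ms arbitrary: n P)
  case Nil
  then show ?case by (simp add: conv_red)
next
  case (Cons m ms)
  then obtain n' where n: "n = Suc n'" "length ms = n'" by auto
  let ?P' = "TLam Nat (TApp (liftT 0 P) (TLam Nat (TApp (TApp (TVar 0) (TLam Nat (TApp (TVar 0) (numT m)))) (TVar 1))))"
  have "convT (TApp (TApp (eraseT (W n)) P) (numT m)) (TApp (eraseT (W n')) ?P')"
    using n by (simp add: conv_red)
  then have "convT (foldl TApp (TApp (eraseT (W n)) P) (map numT (m # ms))) (foldl TApp (TApp (eraseT (W n')) ?P') (map numT ms))"
    by (simp add: conv_foldl)
  also have "convT \<dots> (TApp ?P' (ekont ms))" by (rule Cons(1)[OF n(2)])
  also have "convT \<dots> (TApp P (ekont (m # ms)))" by (simp add: conv_red)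
  finally show ?case .
qed

primrec kk :: "nat list \<Rightarrow> tm \<Rightarrow> tm" where
  "kk [] \<kappa> = \<kappa>"
| "kk (m # ms) \<kappa> = TLam Nat (TApp (TApp (TVar 0) (TLam Nat (etr (\<lambda>_. TZero) (\<lambda>_. TZero) (numl m) (TVar 0)))) (liftT 0 (kk ms \<kappa>)))"

lemma etr_foldl: "etr (\<lambda>_. TZero) (\<lambda>_. TZero) (foldl LApp t (map numl ms)) \<kappa> = etr (\<lambda>_. TZero) (\<lambda>_. TZero) t (kk ms \<kappa>)"
  by (induct ms arbitrary: t) auto

lemma kk_ekont: "convT (kk ms (TLam Nat (TVar 0))) (ekont ms)"
  by (induct ms) (auto intro!: conv_Lam conv_App conv_lift etr_num)

lemma erase_foldl: "eraseT (foldl TApp a xs) = foldl TApp (eraseT a) (map eraseT xs)"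
  by (induct xs arbitrary: a) auto



theorem mainTheorem7:
  fixes n :: nat and f :: "nat list \<Rightarrow> nat"
  assumes "representable_lmT n f"
  shows "representable_T n f"
proof -
  obtain t where t: "typl [] [] t (natArr n)"
    and c: "\<forall>ms. length ms = n \<longrightarrow> convl (foldl LApp t (map numl ms)) (numl (f ms))"
    using assms unfolding representable_lmT_def by blast
  let ?Z = "\<lambda>_::nat. TZero"
  let ?P = "TLam (Kt (natArr n)) (tr [] ?Z ?Z t (TVar 0))"
  let ?t' = "TApp (W n) ?P"
  have "typT [Kt (natArr n)] (TVar 0) (Kt (natArr n))" by (rule typT.var) simp_all
  then have "typT [Kt (natArr n)] (tr [] ?Z ?Z t (TVar 0)) Nat"
    using typ_tr(1)[OF t, of "[Kt (natArr n)]" ?Z ?Z "TVar 0"] by simp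
  then have ty: "typT [] ?t' (natArr n)"
    by (intro typT.app[OF typ_W] typT.lam)
  have "convT (foldl TApp ?t' (map numT ms)) (numT (f ms))" if len: "length ms = n" for ms
  proof -
    let ?id = "TLam Nat (TVar 0)"
    have "convT (etr ?Z ?Z (foldl LApp t (map numl ms)) ?id) (etr ?Z ?Z (numl (f ms)) ?id)"
    proof -
      have "convl (foldl LApp t (map numl ms)) (numl (f ms))" using c len by blast
      then show ?thesis by (rule sim_conv)
    qed
    also have "convT (etr ?Z ?Z (numl (f ms)) ?id) (TApp ?id (numT (f ms)))" by (rule etr_num)
    also have "convT (TApp ?id (numT (f ms))) (numT (f ms))" by (simp add: conv_red)
    finally have 1: "convT (etr ?Z ?Z t (kk ms ?id)) (numT (f ms))" by (simp add: etr_foldl)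
    have 2: "convT (etr ?Z ?Z t (ekont ms)) (etr ?Z ?Z t (kk ms ?id))"
      by (rule etr_cong_k, rule conv_sym, rule kk_ekont)
    have eq: "eraseT (foldl TApp ?t' (map numT ms)) = foldl TApp (TApp (eraseT (W n)) (eraseT ?P)) (map numT ms)"
      by (simp add: erase_foldl comp_def)
    have cv1: "convT (foldl TApp (TApp (eraseT (W n)) (eraseT ?P)) (map numT ms)) (TApp (eraseT ?P) (ekont ms))"
      by (rule W_apply[OF len])
    have cv2: "convT (TApp (eraseT ?P) (ekont ms)) (etr ?Z ?Z t (ekont ms))"
    proof -
      have e1: "eraseT ?P = TLam Nat (etr ?Z ?Z t (TVar 0))" apply (simp only: eraseT.simps) apply (subst erase_tr(1)) apply simp done
      have e2: "substT 0 (ekont ms) (etr ?Z ?Z t (TVar 0)) = etr ?Z ?Z t (ekont ms)" by (simp add: etr_subst)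
      show ?thesis unfolding e1 using conv_beta[of Nat "etr ?Z ?Z t (TVar 0)" "ekont ms"] e2 by simp
    qed
    have "convT (eraseT (foldl TApp ?t' (map numT ms))) (etr ?Z ?Z t (ekont ms))"
      unfolding eq by (rule conv_trans[OF cv1 cv2])
    then have "convT (eraseT (foldl TApp ?t' (map numT ms))) (numT (f ms))"
      using 1 2 by (blast intro: conv_trans)
    then show ?thesis by (rule conv_erase_num)
  qed
  then show ?thesis unfolding representable_T_def using ty by blast
qed


end
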